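(* Let $\mathcal{S}$ be a compact surface without boundary, let $(\mathfrak{m},v^\bullet)$ be a pointed bipartite map of $\mathcal{S}$, and let $((\mathfrak{u},\mathfrak{l}),\varepsilon)=\Phi(\mathfrak{m},v^\bullet)$ be obtained by the construction described in the context. Then: (i) $V(\mathfrak{m})=V_\circ(\mathfrak{u})\sqcup\{v^\bullet\}$ and, for every $v\in V_\circ(\mathfrak{u})$, $\mathfrak{l}(v)=d_\mathfrak{m}(v,v^\bullet)$; (ii) the faces of $\mathfrak{m}$ correspond to the vertices of $V_\bullet(\mathfrak{u})$, and the degree of a face of $\mathfrak{m}$ is twice the degree of the corresponding vertex of $V_\bullet(\mathfrak{u})$; (iii) $\mathfrak{m}$ and $\mathfrak{u}$ have the same number of edges.
   Context: Maps are cellular embeddings of finite graphs (loops and multiple edges allowed) into $\mathcal{S}$, up to homeomorphism, rooted at a distinguished oriented corner (a corner is an angular sector between two consecutive half-edges around a vertex inside a face); the root edge is the edge of the root face that follows the root. The root flip of $\mathfrak{m}$ is the map $\bar{\mathfrak{m}}$ rerooted at the unique oriented corner incident to the other extremity of the root edge and defining the same root edge. A map is bipartite if its vertices can be 2-colored so that each edge joins different colors; the degree of a face is its number of corners; $d_\mathfrak{m}$ is the graph distance; a pointed map is a map with a distinguished vertex $v^\bullet$. Construction $\Phi$. Set $\mathfrak{l}(v)=d_\mathfrak{m}(v^\bullet,v)$ for $v\in V(\mathfrak{m})$ (neighbors differ by exactly $1$). If the root vertex has smaller label than the other extremity of the root edge, set $\varepsilon=+$; otherwise replace $\mathfrak{m}$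 by $\bar{\mathfrak{m}}$ and set $\varepsilon=-$. Unoriented level loops: take a side of an edge whose endpoints have labels $i-1$ and $i$, in a face; travel along the face boundary along this edge from the vertex labeled $i-1$ to the vertex labeled $i$; turn around this vertex (crossing zero or more edges to vertices labeled $i+1$) until meeting an edge to a vertex labeled $i-1$, and travel along it toward that vertex; keep following the boundary of the face now visited until either the loop closes or a vertex labeled $i+1$ is reached; in the latter case the previously visited vertex has label $i$, and one turns around it until meeting an edge to a vertex labeled $i-1$, and iterates. Such a loop is at level $i$. Repeat until each side of each edge of type $i-1$–$i$ (for all $i$) is visited by a loop at level $i$, and add one loop at level $0$ around $v^\bullet$. Orientation: the loops visiting the root corner are oriented according to the root, given origin at the root corner, and declared the first loops, ordered by increasing level; then one travels along the first loop from its origin, and each time new (not yet oriented) loops are encountered they are declared the next ones (by increasing level), given origin at the current location and oriented by the orientation induced by the loop being traveled; after returning to the origin one moves to the next loop, until all loops are oriented. Selection: a loop at level $i$ selects those corners with label $i$ it visits that are immediately preceded (along the oriented loop) by a corner labeled $i-1$. Add a green vertex inside each face and link, without crossings, every selected corner of the face to this green vertex by a green edge. Then $\mathfrak{u}$ is the embedded graph with vertex set $V_\circ(\mathfrak{u})=V(\mathfrak{m})\setminus\{v^\bullet\}$ together with the set $V_\bullet(\mathfrak{u})$ of green vertices and with edge set the green edges, rooted as follows: the half-edge of the root edge of $\mathfrak{m}$ not incident to the root vertex lies in a corner of $\mathfrak{u}$, which is the root corner of $\mathfrak{u}$, oriented by the orientation induced by the root of $\mathfrak{m}$; the white vertices ($V_\circ(\mathfrak{u})$)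 keep the labels $\mathfrak{l}$. Finally $\Phi(\mathfrak{m},v^\bullet)=((\mathfrak{u},\mathfrak{l}),\varepsilon)$. *)

theory Defs
  imports Main
begin

text \<open>A map on a compact surface without boundary (orientable or not) is encoded by its
finite set of flags together with three fixed-point-free involutions al0 (change vertex),
al1 (change edge) and al2 (change face), with al0 al2 a fixed-point-free involution, and
the generated group acting transitively.  A flag is the same as an oriented corner:
the flag x lies in the corner {x, al1 x} and the oriented corner x is followed by the
edge of x.\<close>

record 'f cmap =
  flg :: "'f set"
  al0 :: "'f \<Rightarrow> 'f"
  al1 :: "'f \<Rightarrow> 'f"
  al2 :: "'f \<Rightarrow> 'f"
  rt  :: "'f"

definition frel :: "'f cmap \<Rightarrow> nat set \<Rightarrow> ('f \<times> 'f) set" where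
  "frel M S = {(x, y). x \<in> flg M \<and>
      ((0 \<in> S \<and> y = al0 M x) \<or> (1 \<in> S \<and> y = al1 M x) \<or> (2 \<in> S \<and> y = al2 M x))}"

definition orb :: "'f cmap \<Rightarrow> nat set \<Rightarrow> 'f \<Rightarrow> 'f set" where
  "orb M S x = {y. (x, y) \<in> (frel M S)\<^sup>*}"

definition is_map :: "'f cmap \<Rightarrow> bool" where
  "is_map M \<longleftrightarrow> finite (flg M) \<and> rt M \<in> flg M \<and>
    (\<forall>x\<in>flg M. al0 M x \<in> flg M \<and> al1 M x \<in> flg M \<and> al2 M x \<in> flg M \<and>
       al0 M (al0 M x) = x \<and> al1 M (al1 M x) = x \<and> al2 M (al2 M x) = x \<and>
       al0 M x \<noteq> x \<and> al1 M x \<noteq> x \<and> al2 M x \<noteq> x \<and>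
       al0 M (al2 M x) = al2 M (al0 M x) \<and> al0 M (al2 M x) \<noteq> x) \<and>
    (\<forall>x\<in>flg M. \<forall>y\<in>flg M. (x, y) \<in> (frel M {0,1,2})\<^sup>*)"

definition vertex_of :: "'f cmap \<Rightarrow> 'f \<Rightarrow> 'f set" where
  "vertex_of M x = orb M {1,2} x"
definition edge_of :: "'f cmap \<Rightarrow> 'f \<Rightarrow> 'f set" where
  "edge_of M x = orb M {0,2} x"
definition face_of :: "'f cmap \<Rightarrow> 'f \<Rightarrow> 'f set" where
  "face_of M x = orb M {0,1} x"
definition corner_of :: "'f cmap \<Rightarrow> 'f \<Rightarrow> 'f set" where
  "corner_of M x = {x, al1 M x}"

definition vertices :: "'f cmap \<Rightarrow> 'f set set" where
  "vertices M = vertex_of M ` flg M"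
definition edges :: "'f cmap \<Rightarrow> 'f set set" where
  "edges M = edge_of M ` flg M"
definition faces :: "'f cmap \<Rightarrow> 'f set set" where
  "faces M = face_of M ` flg M"

definition face_degree :: "'f cmap \<Rightarrow> 'f set \<Rightarrow> nat" where
  "face_degree M F = card (corner_of M ` F)"

definition vadj :: "'f cmap \<Rightarrow> 'f set \<Rightarrow> 'f set \<Rightarrow> bool" where
  "vadj M v w \<longleftrightarrow> (\<exists>x\<in>flg M. vertex_of M x = v \<and> vertex_of M (al0 M x) = w)"

definition mdist :: "'f cmap \<Rightarrow> 'f set \<Rightarrow> 'f set \<Rightarrow> nat" where
  "mdist M v w = (LEAST n. \<exists>p. length p = Suc n \<and> hd p = v \<and> last p = w \<and>
                     (\<forall>k<n. vadj M (p ! k) (p ! Suc k)))"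

definition bipartite :: "'f cmap \<Rightarrow> bool" where
  "bipartite M \<longleftrightarrow> (\<exists>col :: 'f set \<Rightarrow> bool.
      \<forall>x\<in>flg M. col (vertex_of M x) \<noteq> col (vertex_of M (al0 M x)))"

definition lab :: "'f cmap \<Rightarrow> 'f set \<Rightarrow> 'f \<Rightarrow> nat" where
  "lab M vb x = mdist M vb (vertex_of M x)"

definition maxlab :: "'f cmap \<Rightarrow> 'f set \<Rightarrow> nat" where
  "maxlab M vb = Max (lab M vb ` flg M)"

text \<open>epsilon (True = +) and the root after the possible root flip.
 The root flip of root flag r is al0 (al2 r): the oriented corner at the other
 extremity of the root edge defining the same root edge.\<close>
definition eps :: "'f cmap \<Rightarrow> 'f set \<Rightarrow> bool" where
  "eps M vb \<longleftrightarrow> lab M vb (rt M) < lab M vb (al0 M (rt M))"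

definition root' :: "'f cmap \<Rightarrow> 'f set \<Rightarrow> 'f" where
  "root' M vb = (if eps M vb then rt M else al0 M (al2 M (rt M)))"

text \<open>An oriented level-i loop is described by the cyclic sequence of the
 flags (oriented corners) it visits: a visited flag x is a corner visited by the loop,
 the loop leaving it towards the edge of x.  One step of the loop either turns around
 the vertex of x across the edge of x (when that vertex has label i and the edge goes
 to label i+1), or travels along the edge of x following the boundary of the face.\<close>
definition lcond :: "'f cmap \<Rightarrow> 'f set \<Rightarrow> nat \<Rightarrow> 'f \<Rightarrow> bool" where
  "lcond M vb i x \<longleftrightarrow> lab M vb x = i \<and> lab M vb (al0 M x) = Suc i"

definition lstep :: "'f cmap \<Rightarrow> 'f set \<Rightarrow> nat \<Rightarrow> 'f \<Rightarrow> 'f" where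
  "lstep M vb i x = (if lcond M vb i x then al1 M (al2 M x) else al1 M (al0 M x))"

definition lorbit :: "'f cmap \<Rightarrow> 'f set \<Rightarrow> nat \<Rightarrow> 'f \<Rightarrow> 'f set" where
  "lorbit M vb i x = {(lstep M vb i ^^ n) x | n. True}"

definition lperiod :: "'f cmap \<Rightarrow> 'f set \<Rightarrow> nat \<Rightarrow> 'f \<Rightarrow> nat" where
  "lperiod M vb i x = (LEAST n. 0 < n \<and> (lstep M vb i ^^ n) x = x)"

definition lwalk :: "'f cmap \<Rightarrow> 'f set \<Rightarrow> nat \<Rightarrow> 'f \<Rightarrow> 'f list" where
  "lwalk M vb i x = map (\<lambda>k. (lstep M vb i ^^ k) x) [0..<lperiod M vb i x]"

text \<open>A flag witnessing that a loop at level i >= 1 traverses a side of an edge of type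
 (i-1)--i; at level 0, a flag at the pointed vertex (loop around vb).\<close>
definition loopflag :: "'f cmap \<Rightarrow> 'f set \<Rightarrow> nat \<Rightarrow> 'f \<Rightarrow> bool" where
  "loopflag M vb i y \<longleftrightarrow> (if i = 0 then lab M vb y = 0 else
      (lab M vb y = i - 1 \<and> lab M vb (al0 M y) = i) \<or>
      (lab M vb y = i \<and> lab M vb (al0 M y) = i - 1))"

definition is_loop_at :: "'f cmap \<Rightarrow> 'f set \<Rightarrow> nat \<Rightarrow> 'f \<Rightarrow> bool" where
  "is_loop_at M vb i x \<longleftrightarrow> x \<in> flg M \<and> lab M vb x \<le> i \<and>
      (\<exists>y\<in>lorbit M vb i x. loopflag M vb i y)"

text \<open>The unoriented loop at level i through the visited flag x is the one through h
 (reversing a loop replaces its visited flags y by al1 y).\<close>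
definition same_loop :: "'f cmap \<Rightarrow> 'f set \<Rightarrow> nat \<Rightarrow> 'f \<Rightarrow> 'f \<Rightarrow> bool" where
  "same_loop M vb i x h \<longleftrightarrow> h \<in> lorbit M vb i x \<or> al1 M h \<in> lorbit M vb i x"

text \<open>Orientation procedure.  Oriented loops with origin are pairs (level, origin flag);
 the list acc is both the list of oriented loops and the queue.\<close>
definition new_at :: "'f cmap \<Rightarrow> 'f set \<Rightarrow> (nat \<times> 'f) list \<Rightarrow> 'f \<Rightarrow> nat list" where
  "new_at M vb acc g = filter (\<lambda>j. is_loop_at M vb j g \<and>
      \<not> (\<exists>(j', h)\<in>set acc. j' = j \<and> same_loop M vb j g h)) [0..<Suc (maxlab M vb)]"

definition visit :: "'f cmap \<Rightarrow> 'f set \<Rightarrow> 'f \<Rightarrow> (nat \<times> 'f) list \<Rightarrow> (nat \<times> 'f) list" where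
  "visit M vb g acc = acc @ map (\<lambda>j. (j, g)) (new_at M vb acc g)"

definition travel :: "'f cmap \<Rightarrow> 'f set \<Rightarrow> nat \<times> 'f \<Rightarrow> (nat \<times> 'f) list \<Rightarrow> (nat \<times> 'f) list" where
  "travel M vb jg acc = fold (visit M vb) (lwalk M vb (fst jg) (snd jg)) acc"

definition ostep :: "'f cmap \<Rightarrow> 'f set \<Rightarrow> nat \<times> (nat \<times> 'f) list \<Rightarrow> nat \<times> (nat \<times> 'f) list" where
  "ostep M vb st = (if fst st < length (snd st)
      then (Suc (fst st), travel M vb (snd st ! fst st) (snd st)) else st)"

definition first_loops :: "'f cmap \<Rightarrow> 'f set \<Rightarrow> (nat \<times> 'f) list" where
  "first_loops M vb = map (\<lambda>j. (j, root' M vb))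
      (filter (\<lambda>j. is_loop_at M vb j (root' M vb)) [0..<Suc (maxlab M vb)])"

definition oriented_loops :: "'f cmap \<Rightarrow> 'f set \<Rightarrow> (nat \<times> 'f) list" where
  "oriented_loops M vb = snd ((ostep M vb ^^ (Suc (maxlab M vb) * card (flg M) + 1))
                              (0, first_loops M vb))"

text \<open>Selected corners: corners of label i visited by an oriented loop at level i and
 immediately preceded by a corner of label i-1.\<close>
definition selected :: "'f cmap \<Rightarrow> 'f set \<Rightarrow> 'f set set" where
  "selected M vb = (\<Union>(j, g)\<in>set (oriented_loops M vb).
      {corner_of M (al0 M h) | h. 1 \<le> j \<and> h \<in> lorbit M vb j g \<and>
         lab M vb h = j - 1 \<and> lab M vb (al0 M h) = j})"

text \<open>The (abstract incidence structure of the) embedded graph u: white vertices,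
 green vertices (one per face, identified with the face it lies in), green edges
 (one per selected corner), and the endpoints (white, green) of each green edge.\<close>
record 'f ugraph =
  Vw :: "'f set set"
  Vg :: "'f set set"
  Eu :: "'f set set"
  ends :: "'f set \<Rightarrow> 'f set \<times> 'f set"

definition green_degree :: "'f ugraph \<Rightarrow> 'f set \<Rightarrow> nat" where
  "green_degree U w = card {e \<in> Eu U. snd (ends U e) = w}"

definition Phi :: "'f cmap \<Rightarrow> 'f set \<Rightarrow> ('f ugraph \<times> ('f set \<Rightarrow> nat)) \<times> bool" where
  "Phi M vb =
     ((\<lparr> Vw = vertices M - {vb}, Vg = faces M, Eu = selected M vb,
         ends = (\<lambda>c. (vertex_of M (SOME x. x \<in> c), face_of M (SOME x. x \<in> c))) \<rparr>,
       (\<lambda>v. mdist M vb v)),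
      eps M vb)"

end

theory Submission
  imports Defs
begin
locale pm =
  fixes M :: "'f cmap" and vb :: "'f set"
  assumes ismap: "is_map M" and bip: "bipartite M" and vbV: "vb \<in> vertices M"
begin

abbreviation "A \<equiv> flg M"
abbreviation "a0 \<equiv> al0 M"
abbreviation "a1 \<equiv> al1 M"
abbreviation "a2 \<equiv> al2 M"

lemma finA: "finite A" using ismap unfolding is_map_def by blast
lemma rtA: "rt M \<in> A" using ismap unfolding is_map_def by blast

lemma ax: assumes "x \<in> A"
  shows "a0 x \<in> A" "a1 x \<in> A" "a2 x \<in> A" "a0 (a0 x) = x" "a1 (a1 x) = x" "a2 (a2 x) = x"
    "a0 x \<noteq> x" "a1 x \<noteq> x" "a2 x \<noteq> x" "a0 (a2 x) = a2 (a0 x)" "a0 (a2 x) \<noteq> x"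
  using ismap assms unfolding is_map_def by blast+

lemma conn: "x \<in> A \<Longrightarrow> y \<in> A \<Longrightarrow> (x, y) \<in> (frel M {0,1,2})\<^sup>*"
  using ismap unfolding is_map_def by blast

lemma frel_iff: "(x,y) \<in> frel M S \<longleftrightarrow> x \<in> A \<and>
   ((0 \<in> S \<and> y = a0 x) \<or> (1 \<in> S \<and> y = a1 x) \<or> (2 \<in> S \<and> y = a2 x))"
  unfolding frel_def by blast

lemma frel_A: "(x,y) \<in> frel M S \<Longrightarrow> y \<in> A"
  by (auto simp: frel_iff ax)

lemma frel_sym: "(x,y) \<in> frel M S \<Longrightarrow> (y,x) \<in> frel M S"
  by (auto simp: frel_iff ax)

lemma rtr_sym: "(x,y) \<in> (frel M S)\<^sup>* \<Longrightarrow> (y,x) \<in> (frel M S)\<^sup>*"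
proof (induction rule: rtrancl_induct)
  case base then show ?case by simp
next
  case (step y z) then show ?case
    by (meson converse_rtrancl_into_rtrancl frel_sym)
qed

lemma orb_self: "x \<in> orb M S x" unfolding orb_def by simp

lemma orb_eq: "y \<in> orb M S x \<Longrightarrow> orb M S y = orb M S x"
  unfolding orb_def using rtr_sym
  by (auto intro: rtrancl_trans)

lemma orb_A: "x \<in> A \<Longrightarrow> orb M S x \<subseteq> A"
proof
  fix y assume "x \<in> A" "y \<in> orb M S x"
  then have "(x,y) \<in> (frel M S)\<^sup>*" unfolding orb_def by simp
  then show "y \<in> A" using \<open>x \<in> A\<close>
    by (induction rule: rtrancl_induct) (auto dest: frel_A)
qed

lemma orb_cl0: "y \<in> orb M S x \<Longrightarrow> y \<in> A \<Longrightarrow> 0 \<in> S \<Longrightarrow> a0 y \<in> orb M S x"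
  unfolding orb_def by (simp add: frel_iff rtrancl.rtrancl_into_rtrancl)
lemma orb_cl1: "y \<in> orb M S x \<Longrightarrow> y \<in> A \<Longrightarrow> 1 \<in> S \<Longrightarrow> a1 y \<in> orb M S x"
  unfolding orb_def by (simp add: frel_iff rtrancl.rtrancl_into_rtrancl)
lemma orb_cl2: "y \<in> orb M S x \<Longrightarrow> y \<in> A \<Longrightarrow> 2 \<in> S \<Longrightarrow> a2 y \<in> orb M S x"
  unfolding orb_def by (simp add: frel_iff rtrancl.rtrancl_into_rtrancl)

lemma orb_eqI: "y \<in> orb M S x \<Longrightarrow> orb M S x = orb M S y"
  using orb_eq by metis

lemma vertex_a1: "x \<in> A \<Longrightarrow> vertex_of M (a1 x) = vertex_of M x"
  unfolding vertex_of_def by (metis orb_cl1 orb_eq orb_self insert_iff)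
lemma vertex_a2: "x \<in> A \<Longrightarrow> vertex_of M (a2 x) = vertex_of M x"
  unfolding vertex_of_def by (metis orb_cl2 orb_eq orb_self insert_iff singletonI)
lemma face_a0: "x \<in> A \<Longrightarrow> face_of M (a0 x) = face_of M x"
  unfolding face_of_def by (metis orb_cl0 orb_eq orb_self insert_iff)
lemma face_a1: "x \<in> A \<Longrightarrow> face_of M (a1 x) = face_of M x"
  unfolding face_of_def by (metis orb_cl1 orb_eq orb_self insert_iff singletonI)

end

definition pth :: "'f cmap \<Rightarrow> 'f set \<Rightarrow> 'f set \<Rightarrow> nat \<Rightarrow> bool" where
  "pth M v w n \<longleftrightarrow> (\<exists>p. length p = Suc n \<and> hd p = v \<and> last p = w \<and>
                     (\<forall>k<n. vadj M (p ! k) (p ! Suc k)))"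

lemma mdist_pth: "mdist M v w = (LEAST n. pth M v w n)"
  unfolding mdist_def pth_def by simp

lemma pth_refl: "pth M v v 0"
  unfolding pth_def by (rule exI[of _ "[v]"]) simp

lemma pth_0: "pth M v w 0 \<Longrightarrow> v = w"
  unfolding pth_def by (auto simp: length_Suc_conv)

lemma pth_snoc: assumes "pth M v w n" "vadj M w u" shows "pth M v u (Suc n)"
proof -
  obtain p where p: "length p = Suc n" "hd p = v" "last p = w" "\<forall>k<n. vadj M (p ! k) (p ! Suc k)"
    using assms(1) unfolding pth_def by blast
  have "p \<noteq> []" using p by auto
  then have pn: "p ! n = w" using p by (simp add: last_conv_nth)
  show ?thesis unfolding pth_def
  proof (intro exI[of _ "p @ [u]"] conjI allI impI)
    show "length (p @ [u]) = Suc (Suc n)" using p by simp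
    show "hd (p @ [u]) = v" using p by (cases p) auto
    show "last (p @ [u]) = u" by simp
    fix k assume k: "k < Suc n"
    show "vadj M ((p @ [u]) ! k) ((p @ [u]) ! Suc k)"
    proof (cases "k < n")
      case True then show ?thesis using p by (simp add: nth_append)
    next
      case False then have "k = n" using k by simp
      then show ?thesis using p pn assms(2) by (simp add: nth_append)
    qed
  qed
qed

lemma pth_cons: assumes "pth M w u n" "vadj M v w" shows "pth M v u (Suc n)"
proof -
  obtain p where p: "length p = Suc n" "hd p = w" "last p = u" "\<forall>k<n. vadj M (p ! k) (p ! Suc k)"
    using assms(1) unfolding pth_def by blast
  show ?thesis unfolding pth_def
  proof (intro exI[of _ "v # p"] conjI allI impI)
    show "length (v # p) = Suc (Suc n)" using p by simp
    show "hd (v # p) = v" by simp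
    show "last (v # p) = u" using p by (cases p) auto
    fix k assume k: "k < Suc n"
    show "vadj M ((v # p) ! k) ((v # p) ! Suc k)"
    proof (cases k)
      case 0 then show ?thesis using p assms(2) by (cases p) auto
    next
      case (Suc k') then show ?thesis using p k by simp
    qed
  qed
qed

lemma pth_butlast: assumes "pth M v u (Suc n)" shows "\<exists>w. pth M v w n \<and> vadj M w u"
proof -
  obtain p where p: "length p = Suc (Suc n)" "hd p = v" "last p = u" "\<forall>k<Suc n. vadj M (p ! k) (p ! Suc k)"
    using assms(1) unfolding pth_def by blast
  let ?q = "butlast p"
  have lq: "length ?q = Suc n" using p by simp
  have P1: "pth M v (p ! n) n" unfolding pth_def
  proof (intro exI[of _ ?q] conjI allI impI)
    show "length ?q = Suc n" by fact
    have l0: "length ?q \<noteq> 0" using lq by simp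
    have qne: "?q \<noteq> []" using l0 by (metis list.size(3))
    have "hd ?q = ?q ! 0" using qne by (simp add: hd_conv_nth)
    also have "... = p ! 0" using lq by (simp add: nth_butlast)
    also have "... = hd p" using p by (metis hd_conv_nth list.size(3) nat.distinct(1))
    finally show "hd ?q = v" using p by simp
    have "length ?q \<noteq> 0" using lq by simp
    then have "?q \<noteq> []" by (metis list.size(3))
    then have "last ?q = ?q ! n" using lq by (simp add: last_conv_nth)
    also have "... = p ! n" using lq by (simp add: nth_butlast)
    finally show "last ?q = p ! n" .
    fix k assume "k < n" then show "vadj M (?q ! k) (?q ! Suc k)" using p lq by (simp add: nth_butlast)
  qed
  have "p \<noteq> []" using p by auto
  then have "p ! Suc n = u" using p by (simp add: last_conv_nth)
  then have "vadj M (p ! n) u" using p(4) by auto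
  then show ?thesis using P1 by blast
qed

context pm begin

lemma vadj_sym: "vadj M v w \<Longrightarrow> vadj M w v"
  unfolding vadj_def by (metis ax(1,4))

lemma pth_rev: "pth M v w n \<Longrightarrow> pth M w v n"
proof (induction n arbitrary: w)
  case 0 then have "v = w" by (rule pth_0)
  then show ?case using pth_refl by simp
next
  case (Suc n)
  then obtain u where "pth M v u n" "vadj M u w" using pth_butlast by blast
  then show ?case using Suc.IH pth_cons vadj_sym by blast
qed

lemma mdist_sym: "mdist M v w = mdist M w v"
proof -
  have "(\<lambda>n. pth M v w n) = (\<lambda>n. pth M w v n)" using pth_rev by blast
  then show ?thesis unfolding mdist_pth by simp
qed

lemma conn_pth: assumes "x \<in> A" "y \<in> A" shows "\<exists>n. pth M (vertex_of M x) (vertex_of M y) n"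
proof -
  have "(x, y) \<in> (frel M {0,1,2})\<^sup>*" using conn assms by blast
  then show ?thesis
  proof (induction rule: rtrancl_induct)
    case base then show ?case using pth_refl by blast
  next
    case (step y z)
    then obtain n where n: "pth M (vertex_of M x) (vertex_of M y) n" by blast
    from step(2) have yA: "y \<in> A" and z: "z = a0 y \<or> z = a1 y \<or> z = a2 y" by (auto simp: frel_iff)
    show ?case using z
    proof (elim disjE)
      assume "z = a0 y"
      then have "vadj M (vertex_of M y) (vertex_of M z)" unfolding vadj_def using yA by blast
      then show ?thesis using n pth_snoc by blast
    qed (use n yA vertex_a1 vertex_a2 in auto)
  qed
qed

definition lb :: "'f \<Rightarrow> nat" where "lb x = lab M vb x"

lemma vb_ex: "\<exists>x0\<in>A. vertex_of M x0 = vb" using vbV unfolding vertices_def by blast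

lemma lab_ex: "x \<in> A \<Longrightarrow> \<exists>n. pth M vb (vertex_of M x) n"
  using vb_ex conn_pth by blast

lemma labP: "x \<in> A \<Longrightarrow> pth M vb (vertex_of M x) (lb x)"
  unfolding lb_def lab_def mdist_pth using lab_ex by (rule LeastI_ex)

lemma lab_le: "pth M vb (vertex_of M x) n \<Longrightarrow> lb x \<le> n"
  unfolding lb_def lab_def mdist_pth by (rule Least_le)

lemma lab0: "x \<in> A \<Longrightarrow> lb x = 0 \<longleftrightarrow> vertex_of M x = vb"
proof
  assume "x \<in> A" "lb x = 0" then show "vertex_of M x = vb" using labP pth_0 by fastforce
next
  assume "vertex_of M x = vb" then show "lb x = 0" using lab_le[of x 0] pth_refl by fastforce
qed

lemma lb_a1: "x \<in> A \<Longrightarrow> lb (a1 x) = lb x" unfolding lb_def lab_def using vertex_a1 by simp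
lemma lb_a2: "x \<in> A \<Longrightarrow> lb (a2 x) = lb x" unfolding lb_def lab_def using vertex_a2 by simp

lemma parity: fixes col :: "'f set \<Rightarrow> bool" assumes "pth M v w n" "col \<in> {c. \<forall>x\<in>A. c (vertex_of M x) \<noteq> c (vertex_of M (a0 x))}"
  shows "col v = col w \<longleftrightarrow> even n"
  using assms(1)
proof (induction n arbitrary: w)
  case 0 then show ?case using pth_0 by auto
next
  case (Suc n)
  then obtain u where u: "pth M v u n" "vadj M u w" using pth_butlast by blast
  have "col u \<noteq> col w" using u(2) assms(2) unfolding vadj_def by auto
  moreover have "col v = col u \<longleftrightarrow> even n" using Suc.IH[OF u(1)] .
  moreover have "even (Suc n) \<longleftrightarrow> \<not> even n" by simp
  ultimately show ?case by (metis (full_types))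
qed

lemma lab_a0: assumes "x \<in> A" shows "lb (a0 x) = Suc (lb x) \<or> lb x = Suc (lb (a0 x))"
proof -
  have ax0: "a0 x \<in> A" using ax assms by blast
  have v1: "vadj M (vertex_of M x) (vertex_of M (a0 x))" unfolding vadj_def using assms by blast
  have le1: "lb (a0 x) \<le> Suc (lb x)" using pth_snoc[OF labP[OF assms] v1] lab_le by blast
  have le2: "lb x \<le> Suc (lb (a0 x))" using pth_snoc[OF labP[OF ax0] vadj_sym[OF v1]] lab_le by blast
  obtain col :: "'f set \<Rightarrow> bool" where col: "\<forall>x\<in>A. col (vertex_of M x) \<noteq> col (vertex_of M (a0 x))"
    using bip unfolding bipartite_def by blast
  have p1: "col vb = col (vertex_of M x) \<longleftrightarrow> even (lb x)" using parity labP[OF assms] col by blast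
  have p2: "col vb = col (vertex_of M (a0 x)) \<longleftrightarrow> even (lb (a0 x))" using parity labP[OF ax0] col by blast
  have "col (vertex_of M x) \<noteq> col (vertex_of M (a0 x))" using col assms by blast
  then have "even (lb x) \<noteq> even (lb (a0 x))" using p1 p2 by (metis (full_types))
  then have "lb x \<noteq> lb (a0 x)" by metis
  then show ?thesis using le1 le2 by linarith
qed

lemma lab_down: assumes "x \<in> A" "lb x = Suc n"
  shows "\<exists>w\<in>vertex_of M x. w \<in> A \<and> lb (a0 w) = n"
proof -
  obtain u where u: "pth M vb u n" "vadj M u (vertex_of M x)" using pth_butlast labP[OF assms(1)] assms(2) by metis
  then obtain z where z: "z \<in> A" "vertex_of M z = u" "vertex_of M (a0 z) = vertex_of M x"
    unfolding vadj_def by blast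
  let ?w = "a0 z"
  have wA: "?w \<in> A" using z ax by blast
  have "?w \<in> vertex_of M ?w" unfolding vertex_of_def by (rule orb_self)
  then have wv: "?w \<in> vertex_of M x" using z by simp
  have "lb z \<le> n" using lab_le u z by blast
  moreover have "lb ?w = Suc n" using assms z unfolding lb_def lab_def by simp
  moreover have "lb (a0 ?w) = lb z" using z ax by simp
  ultimately have "lb (a0 ?w) = n" using lab_a0[OF wA] by auto
  then show ?thesis using wv wA by blast
qed

end

lemma inj_funpow_cancel:
  assumes "inj_on f S" "f ` S \<subseteq> S" "x \<in> S" "y \<in> S" "(f ^^ n) x = (f ^^ n) y"
  shows "x = y"
  using assms(3-5)
proof (induction n arbitrary: x y)
  case 0 then show ?case by simp
next
  case (Suc n)
  have "(f ^^ n) (f x) = (f ^^ n) (f y)" using Suc.prems(3) unfolding funpow_Suc_right o_apply .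
  moreover have "f x \<in> S" "f y \<in> S" using Suc.prems(1,2) assms(2) by blast+
  ultimately have "f x = f y" using Suc.IH by blast
  then show ?case using assms(1) Suc.prems(1,2) by (meson inj_onD)
qed

lemma funpow_in: "f ` S \<subseteq> S \<Longrightarrow> x \<in> S \<Longrightarrow> (f ^^ n) x \<in> S"
  by (induction n) auto

lemma funpow_split: "a \<le> b \<Longrightarrow> (f ^^ b) x = (f ^^ a) ((f ^^ (b - a)) x)"
proof -
  assume "a \<le> b"
  then have "b = a + (b - a)" by simp
  moreover have "(f ^^ (a + (b - a))) x = (f ^^ a) ((f ^^ (b - a)) x)" by (simp add: funpow_add)
  ultimately show ?thesis by simp
qed

lemma perm_period:
  assumes "finite S" "inj_on f S" "f ` S \<subseteq> S" "x \<in> S"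
  shows "\<exists>n>0. (f ^^ n) x = x"
proof -
  have "\<not> inj_on (\<lambda>k. (f ^^ k) x) {0..card S}"
  proof
    assume "inj_on (\<lambda>k. (f ^^ k) x) {0..card S}"
    then have "card ((\<lambda>k. (f ^^ k) x) ` {0..card S}) = card {0..card S}" by (rule card_image)
    moreover have "(\<lambda>k. (f ^^ k) x) ` {0..card S} \<subseteq> S"
    proof (rule image_subsetI)
      fix k show "(f ^^ k) x \<in> S" by (rule funpow_in[OF assms(3,4)])
    qed
    then have "card ((\<lambda>k. (f ^^ k) x) ` {0..card S}) \<le> card S" by (rule card_mono[OF assms(1)])
    ultimately show False by simp
  qed
  then have "\<exists>a\<in>{0..card S}. \<exists>b\<in>{0..card S}. (f ^^ a) x = (f ^^ b) x \<and> a \<noteq> b"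
    unfolding inj_on_def by blast
  then obtain a b where ab: "a \<noteq> b" "(f ^^ a) x = (f ^^ b) x" by blast
  have key: "\<exists>n>0. (f ^^ n) x = x" if ab: "a < b" "(f ^^ a) x = (f ^^ b) x" for a b
  proof -
    have "(f ^^ a) ((f ^^ (b - a)) x) = (f ^^ a) x"
      using ab funpow_split[of a b f x] by simp
    then have "(f ^^ (b - a)) x = x"
      using inj_funpow_cancel[OF assms(2,3) funpow_in[OF assms(3,4)] assms(4)] by blast
    then show ?thesis using ab by (intro exI[of _ "b - a"]) auto
  qed
  show ?thesis
  proof (cases "a < b")
    case True then show ?thesis using key ab by blast
  next
    case False then have "b < a" using ab by simp
    then show ?thesis using key[of b a] ab by simp
  qed
qed

context pm begin

abbreviation "sg j \<equiv> lstep M vb j"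
definition L :: "nat \<Rightarrow> 'f set" where "L j = {x\<in>A. lb x \<le> j}"

lemma lcond_iff: "lcond M vb i x \<longleftrightarrow> lb x = i \<and> lb (a0 x) = Suc i"
  unfolding lcond_def lb_def by simp

lemma sg_def2: "sg j x = (if lb x = j \<and> lb (a0 x) = Suc j then a1 (a2 x) else a1 (a0 x))"
  unfolding lstep_def lcond_iff by simp

lemma sg_yes: "lb x = j \<Longrightarrow> lb (a0 x) = Suc j \<Longrightarrow> sg j x = a1 (a2 x)"
  unfolding sg_def2 by simp
lemma sg_no: "\<not> (lb x = j \<and> lb (a0 x) = Suc j) \<Longrightarrow> sg j x = a1 (a0 x)"
  unfolding sg_def2 by meson

lemma sg_A: "x \<in> A \<Longrightarrow> sg j x \<in> A" unfolding sg_def2 using ax by auto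

lemma lb_a0a2: "x \<in> A \<Longrightarrow> lb (a0 (a2 x)) = lb (a0 x)"
  using ax lb_a2 by metis

lemma sg_L: assumes "x \<in> L j" shows "sg j x \<in> L j"
proof -
  have x: "x \<in> A" "lb x \<le> j" using assms unfolding L_def by auto
  show ?thesis
  proof (cases "lb x = j \<and> lb (a0 x) = Suc j")
    case True then show ?thesis using x ax lb_a1 lb_a2 unfolding L_def sg_def2 by auto
  next
    case False
    then have "lb (a0 x) \<le> j" using lab_a0[OF x(1)] x(2) by auto
    then show ?thesis using False x ax lb_a1 unfolding L_def sg_def2 by auto
  qed
qed

lemma sg_Limg: "sg j ` L j \<subseteq> L j" using sg_L by blast

lemma sg_inj: "inj_on (sg j) (L j)"
proof (rule inj_onI)
  fix x y assume xL: "x \<in> L j" and yL: "y \<in> L j" and e: "sg j x = sg j y"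
  have x: "x \<in> A" "lb x \<le> j" and y: "y \<in> A" "lb y \<le> j" using xL yL unfolding L_def by auto
  have a2x: "a2 x \<in> A" "a0 x \<in> A" "a2 y \<in> A" "a0 y \<in> A" using ax x y by auto
  let ?cx = "lb x = j \<and> lb (a0 x) = Suc j" and ?cy = "lb y = j \<and> lb (a0 y) = Suc j"
  show "x = y"
  proof (cases ?cx)
    case cx: True
    then have sx: "sg j x = a1 (a2 x)" using sg_yes by blast
    show ?thesis
    proof (cases ?cy)
      case True
      then have "a1 (a2 x) = a1 (a2 y)" using e sx sg_yes by metis
      then have "a1 (a1 (a2 x)) = a1 (a1 (a2 y))" by simp
      then have "a2 x = a2 y" using ax a2x by simp
      then have "a2 (a2 x) = a2 (a2 y)" by simp
      then show ?thesis using ax x y by simp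
    next
      case False
      then have "a1 (a2 x) = a1 (a0 y)" using e sx sg_no by metis
      then have "a1 (a1 (a2 x)) = a1 (a1 (a0 y))" by simp
      then have "a2 x = a0 y" using ax a2x by simp
      then have "a0 (a2 x) = a0 (a0 y)" by simp
      then have "y = a0 (a2 x)" using ax y by simp
      then have "lb y = lb (a0 x)" using lb_a0a2 x by simp
      then show ?thesis using cx y by simp
    qed
  next
    case cx: False
    then have sx: "sg j x = a1 (a0 x)" using sg_no by blast
    show ?thesis
    proof (cases ?cy)
      case True
      then have "a1 (a0 x) = a1 (a2 y)" using e sx sg_yes by metis
      then have "a1 (a1 (a0 x)) = a1 (a1 (a2 y))" by simp
      then have "a0 x = a2 y" using ax a2x by simp
      then have "a0 (a0 x) = a0 (a2 y)" by simp
      then have "x = a0 (a2 y)" using ax x by simp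
      then have "lb x = lb (a0 y)" using lb_a0a2 y by simp
      then show ?thesis using True x by simp
    next
      case False
      then have "a1 (a0 x) = a1 (a0 y)" using e sx sg_no by metis
      then have "a1 (a1 (a0 x)) = a1 (a1 (a0 y))" by simp
      then have "a0 x = a0 y" using ax a2x by simp
      then have "a0 (a0 x) = a0 (a0 y)" by simp
      then show ?thesis using ax x y by simp
    qed
  qed
qed

lemma finL: "finite (L j)" unfolding L_def using finA by simp

lemma sg_period: "x \<in> L j \<Longrightarrow> \<exists>n>0. (sg j ^^ n) x = x"
  using perm_period[OF finL sg_inj sg_Limg] by blast

lemma sg_rev: assumes "x \<in> L j" shows "sg j (a1 (sg j x)) = a1 x"
proof -
  have x: "x \<in> A" "lb x \<le> j" using assms unfolding L_def by auto
  show ?thesis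
  proof (cases "lb x = j \<and> lb (a0 x) = Suc j")
    case True
    then have "sg j x = a1 (a2 x)" using sg_yes by blast
    then have 1: "a1 (sg j x) = a2 x" using ax x by simp
    have "lb (a2 x) = j" "lb (a0 (a2 x)) = Suc j" using True lb_a2 lb_a0a2 x by auto
    then have "sg j (a2 x) = a1 (a2 (a2 x))" using sg_yes by blast
    then show ?thesis using 1 ax x by simp
  next
    case False
    then have "sg j x = a1 (a0 x)" using sg_no by blast
    then have 1: "a1 (sg j x) = a0 x" using ax x by simp
    have "\<not> (lb (a0 x) = j \<and> lb (a0 (a0 x)) = Suc j)" using x ax by simp
    then have "sg j (a0 x) = a1 (a0 (a0 x))" using sg_no by blast
    then show ?thesis using 1 ax x by simp
  qed
qed

lemma lorbit_def2: "lorbit M vb j x = range (\<lambda>n. (sg j ^^ n) x)"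
  unfolding lorbit_def by auto

lemma lorb_L: "x \<in> L j \<Longrightarrow> lorbit M vb j x \<subseteq> L j"
  unfolding lorbit_def2 using funpow_in[OF sg_Limg] by blast

lemma lorb_self: "x \<in> lorbit M vb j x"
proof -
  have "(sg j ^^ 0) x = x" by simp
  then show ?thesis unfolding lorbit_def2 by (metis rangeI)
qed

lemma lorb_cl: assumes "y \<in> lorbit M vb j x" shows "sg j y \<in> lorbit M vb j x"
proof -
  obtain n where "y = (sg j ^^ n) x" using assms unfolding lorbit_def2 by blast
  then have "sg j y = (sg j ^^ Suc n) x" by simp
  then show ?thesis unfolding lorbit_def2 by (metis rangeI)
qed

lemma lorb_cl_n: "y \<in> lorbit M vb j x \<Longrightarrow> (sg j ^^ n) y \<in> lorbit M vb j x"
  by (induction n) (auto intro: lorb_cl)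

lemma lorb_sub: assumes "y \<in> lorbit M vb j x" shows "lorbit M vb j y \<subseteq> lorbit M vb j x"
proof
  fix z assume "z \<in> lorbit M vb j y"
  then obtain n where "z = (sg j ^^ n) y" unfolding lorbit_def2 by blast
  then show "z \<in> lorbit M vb j x" using lorb_cl_n[OF assms] by simp
qed

lemma sg_period_mult: assumes "(sg j ^^ p) x = x" shows "(sg j ^^ (p * m)) x = x"
proof (induction m)
  case 0 then show ?case by simp
next
  case (Suc m)
  have "p * Suc m = p + p * m" by simp
  then have "(sg j ^^ (p * Suc m)) x = (sg j ^^ p) ((sg j ^^ (p * m)) x)" by (simp only: funpow_add o_apply)
  then show ?case using Suc.IH assms by simp
qed

lemma lorb_back: assumes "x \<in> L j" "y \<in> lorbit M vb j x" shows "x \<in> lorbit M vb j y"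
proof -
  obtain n where n: "y = (sg j ^^ n) x" using assms(2) unfolding lorbit_def2 by blast
  obtain p where p: "p > 0" "(sg j ^^ p) x = x" using sg_period assms(1) by blast
  have e: "(sg j ^^ (p * n)) x = x" by (rule sg_period_mult[OF p(2)])
  have nn: "n \<le> p * n" using p(1) by simp
  have "(sg j ^^ (p * n)) x = (sg j ^^ (p * n - n)) ((sg j ^^ (p * n - (p * n - n))) x)"
    by (rule funpow_split) simp
  also have "p * n - (p * n - n) = n" using nn by simp
  finally have "(sg j ^^ (p * n)) x = (sg j ^^ (p * n - n)) ((sg j ^^ n) x)" .
  then have "(sg j ^^ (p * n - n)) y = x" using e n by simp
  then show ?thesis unfolding lorbit_def2 by (metis rangeI)
qed

lemma lorb_eq: "x \<in> L j \<Longrightarrow> y \<in> lorbit M vb j x \<Longrightarrow> lorbit M vb j y = lorbit M vb j x"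
  using lorb_sub lorb_back by blast

lemma lorb_pred: assumes "x \<in> L j" "y \<in> lorbit M vb j x" shows "\<exists>z\<in>lorbit M vb j x. sg j z = y"
proof -
  have yL: "y \<in> L j" using lorb_L assms by blast
  obtain p where p: "p > 0" "(sg j ^^ p) y = y" using sg_period yL by blast
  let ?z = "(sg j ^^ (p - 1)) y"
  have "sg j ?z = (sg j ^^ Suc (p - 1)) y" by simp
  also have "Suc (p - 1) = p" using p(1) by simp
  finally have "sg j ?z = y" using p(2) by simp
  moreover have "?z \<in> lorbit M vb j x" using lorb_cl_n assms(2) by blast
  ultimately show ?thesis by blast
qed

lemma lorb_pre_n: assumes "x \<in> L j" shows "\<exists>w\<in>lorbit M vb j x. (sg j ^^ m) w = x"
proof (induction m)
  case 0 then show ?case using lorb_self by (metis funpow_0)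
next
  case (Suc m)
  then obtain w where w: "w \<in> lorbit M vb j x" "(sg j ^^ m) w = x" by blast
  obtain z where z: "z \<in> lorbit M vb j x" "sg j z = w" using lorb_pred[OF assms w(1)] by blast
  have "(sg j ^^ Suc m) z = (sg j ^^ m) (sg j z)" by (simp only: funpow_Suc_right o_apply)
  then show ?case using z w by auto
qed

lemma sgn_L: "x \<in> L j \<Longrightarrow> (sg j ^^ n) x \<in> L j"
  by (rule funpow_in[OF sg_Limg])

lemma sg_rev_n: assumes "x \<in> L j" shows "(sg j ^^ n) (a1 ((sg j ^^ n) x)) = a1 x"
proof (induction n)
  case 0 then show ?case by simp
next
  case (Suc n)
  have i1: "(sg j ^^ Suc n) x = sg j ((sg j ^^ n) x)" by simp
  have i2: "(sg j ^^ Suc n) w = (sg j ^^ n) (sg j w)" for w by (simp only: funpow_Suc_right o_apply)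
  have "(sg j ^^ Suc n) (a1 ((sg j ^^ Suc n) x)) = (sg j ^^ n) (sg j (a1 ((sg j ^^ Suc n) x)))"
    by (rule i2)
  also have "... = (sg j ^^ n) (sg j (a1 (sg j ((sg j ^^ n) x))))" by (simp only: i1)
  also have "sg j (a1 (sg j ((sg j ^^ n) x))) = a1 ((sg j ^^ n) x)"
    by (rule sg_rev[OF sgn_L[OF assms]])
  finally show ?case using Suc.IH by simp
qed

lemma L_a1: "x \<in> L j \<Longrightarrow> a1 x \<in> L j"
  unfolding L_def using ax lb_a1 by auto

lemma lorb_a1: assumes "x \<in> L j" shows "lorbit M vb j (a1 x) = a1 ` lorbit M vb j x"
proof
  show "lorbit M vb j (a1 x) \<subseteq> a1 ` lorbit M vb j x"
  proof
    fix z assume "z \<in> lorbit M vb j (a1 x)"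
    then obtain m where m: "z = (sg j ^^ m) (a1 x)" unfolding lorbit_def2 by blast
    obtain w where w: "w \<in> lorbit M vb j x" "(sg j ^^ m) w = x" using lorb_pre_n[OF assms] by blast
    have wL: "w \<in> L j" using w(1) lorb_L assms by blast
    have "(sg j ^^ m) (a1 ((sg j ^^ m) w)) = a1 w" by (rule sg_rev_n[OF wL])
    then have "z = a1 w" using m w(2) by simp
    then show "z \<in> a1 ` lorbit M vb j x" using w(1) by blast
  qed
next
  show "a1 ` lorbit M vb j x \<subseteq> lorbit M vb j (a1 x)"
  proof
    fix z assume "z \<in> a1 ` lorbit M vb j x"
    then obtain k where k: "z = a1 ((sg j ^^ k) x)" unfolding lorbit_def2 by blast
    have zL: "z \<in> L j" using k L_a1 sgn_L assms by simp
    have "(sg j ^^ k) z = a1 x" using k sg_rev_n[OF assms] by simp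
    then have "a1 x \<in> lorbit M vb j z" unfolding lorbit_def2 by (metis rangeI)
    then show "z \<in> lorbit M vb j (a1 x)" using lorb_back[OF zL] by blast
  qed
qed

lemma lorb_disj: assumes "x \<in> L j" shows "a1 x \<notin> lorbit M vb j x"
proof
  assume "a1 x \<in> lorbit M vb j x"
  then obtain m where m: "a1 x = (sg j ^^ m) x" unfolding lorbit_def2 by blast
  have "\<exists>t. m = 2 * t \<or> m = Suc (2 * t)" by presburger
  then obtain t where t: "m = 2 * t \<or> m = Suc (2 * t)" by blast
  let ?y = "(sg j ^^ t) x"
  have yL: "?y \<in> L j" using sgn_L assms by blast
  have yA: "?y \<in> A" using yL unfolding L_def by blast
  have r: "(sg j ^^ t) (a1 ?y) = a1 x" by (rule sg_rev_n[OF assms])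
  have a1yL: "a1 ?y \<in> L j" using L_a1 yL by blast
  show False using t
  proof
    assume "m = 2 * t"
    then have "(sg j ^^ m) x = (sg j ^^ t) ?y" by (simp add: funpow_add mult_2)
    then have "a1 ?y = ?y" using inj_funpow_cancel[OF sg_inj sg_Limg a1yL yL] r m by simp
    then show False using ax yA by simp
  next
    assume "m = Suc (2 * t)"
    then have "(sg j ^^ m) x = (sg j ^^ t) (sg j ?y)"
      by (simp add: funpow_add mult_2 funpow_swap1)
    moreover have "sg j ?y \<in> L j" using sg_L yL by blast
    ultimately have e: "a1 ?y = sg j ?y" using inj_funpow_cancel[OF sg_inj sg_Limg a1yL] r m by simp
    show False
    proof (cases "lb ?y = j \<and> lb (a0 ?y) = Suc j")
      case True
      then have "a1 ?y = a1 (a2 ?y)" using e sg_yes by metis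
      then have "a1 (a1 ?y) = a1 (a1 (a2 ?y))" by simp
      then have "?y = a2 ?y" using ax yA by simp
      then show False using ax yA by metis
    next
      case False
      then have "a1 ?y = a1 (a0 ?y)" using e sg_no by metis
      then have "a1 (a1 ?y) = a1 (a1 (a0 ?y))" by simp
      then have "?y = a0 ?y" using ax yA by simp
      then show False using ax yA by metis
    qed
  qed
qed

lemma lperiod_ok: assumes "x \<in> L j"
  shows "0 < lperiod M vb j x \<and> (sg j ^^ lperiod M vb j x) x = x"
  unfolding lperiod_def using sg_period[OF assms] by (rule LeastI_ex)

lemma lwalk_set: assumes "x \<in> L j" shows "set (lwalk M vb j x) = lorbit M vb j x"
proof
  show "set (lwalk M vb j x) \<subseteq> lorbit M vb j x" unfolding lwalk_def lorbit_def2 by auto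
next
  show "lorbit M vb j x \<subseteq> set (lwalk M vb j x)"
  proof
    fix z assume "z \<in> lorbit M vb j x"
    then obtain n where n: "z = (sg j ^^ n) x" unfolding lorbit_def2 by blast
    let ?p = "lperiod M vb j x"
    have p: "0 < ?p" "(sg j ^^ ?p) x = x" using lperiod_ok[OF assms] by auto
    have "z = (sg j ^^ (n mod ?p)) x" using n funpow_mod_eq[OF p(2)] by simp
    moreover have "n mod ?p < ?p" using p(1) by simp
    ultimately show "z \<in> set (lwalk M vb j x)" unfolding lwalk_def by auto
  qed
qed

end

lemma sorted_wrt_two:
  "sorted_wrt R xs \<Longrightarrow> x \<in> set xs \<Longrightarrow> y \<in> set xs \<Longrightarrow> x \<noteq> y \<Longrightarrow> R x y \<or> R y x"
  by (induction xs) auto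

lemma sorted_wrt_distinct: "sorted_wrt R xs \<Longrightarrow> (\<And>x. x \<in> set xs \<Longrightarrow> \<not> R x x) \<Longrightarrow> distinct xs"
  by (induction xs) auto

context pm begin

lemma lab_lb: "lab M vb x = lb x" unfolding lb_def ..

abbreviation "ml \<equiv> maxlab M vb"

lemma ml_ge: "x \<in> A \<Longrightarrow> lb x \<le> ml"
  unfolding maxlab_def lab_lb using finA by simp

definition acc_has :: "(nat \<times> 'f) list \<Rightarrow> nat \<Rightarrow> 'f \<Rightarrow> bool" where
  "acc_has acc i y \<longleftrightarrow> (\<exists>(j, h)\<in>set acc. j = i \<and> same_loop M vb i y h)"

definition RR :: "nat \<times> 'f \<Rightarrow> nat \<times> 'f \<Rightarrow> bool" where
  "RR e1 e2 \<longleftrightarrow> (fst e1 = fst e2 \<longrightarrow> \<not> same_loop M vb (fst e2) (snd e2) (snd e1))"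

definition good :: "(nat \<times> 'f) list \<Rightarrow> bool" where
  "good acc \<longleftrightarrow> (\<forall>(j, g)\<in>set acc. j \<le> ml \<and> is_loop_at M vb j g) \<and> sorted_wrt RR acc"

definition Inv :: "nat \<times> (nat \<times> 'f) list \<Rightarrow> bool" where
  "Inv st \<longleftrightarrow> good (snd st) \<and> fst st \<le> length (snd st) \<and> set (first_loops M vb) \<subseteq> set (snd st) \<and>
     (\<forall>p<fst st. \<forall>y\<in>lorbit M vb (fst (snd st ! p)) (snd (snd st ! p)). \<forall>i\<le>ml.
        is_loop_at M vb i y \<longrightarrow> acc_has (snd st) i y)"

lemma acc_has_app: "acc_has acc i y \<Longrightarrow> acc_has (acc @ zs) i y"
  unfolding acc_has_def by auto

lemma same_loop_refl: "same_loop M vb j g g"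
  unfolding same_loop_def using lorb_self by blast

lemma RR_irrefl: "\<not> RR x x"
  unfolding RR_def using same_loop_refl by simp

lemma is_loop_L: "is_loop_at M vb j g \<Longrightarrow> g \<in> L j"
  unfolding is_loop_at_def L_def lab_lb by simp

lemma news_sorted: "sorted_wrt RR (map (\<lambda>j. (j, g)) (filter P [0..<n]))"
proof -
  have "sorted_wrt (<) (filter P [0..<n])" by (rule sorted_wrt_filter) simp
  then have "sorted_wrt (\<lambda>x y. RR (x, g) (y, g)) (filter P [0..<n])"
    by (rule sorted_wrt_mono_rel[rotated]) (simp add: RR_def)
  then show ?thesis by (simp add: sorted_wrt_map)
qed

lemma visit_good: assumes "good acc" shows "good (visit M vb g acc)"
proof -
  let ?N = "map (\<lambda>j. (j, g)) (new_at M vb acc g)"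
  have v: "visit M vb g acc = acc @ ?N" unfolding visit_def ..
  have n1: "\<forall>(j, g')\<in>set ?N. j \<le> ml \<and> is_loop_at M vb j g'" unfolding new_at_def by auto
  have n2: "sorted_wrt RR ?N" unfolding new_at_def by (rule news_sorted)
  have n3: "\<forall>x\<in>set acc. \<forall>y\<in>set ?N. RR x y"
    unfolding new_at_def RR_def by auto
  show ?thesis using assms n1 n2 n3 unfolding good_def v sorted_wrt_append by auto
qed

lemma visit_has: assumes "i \<le> ml" "is_loop_at M vb i g" shows "acc_has (visit M vb g acc) i g"
proof (cases "\<exists>(j', h)\<in>set acc. j' = i \<and> same_loop M vb i g h")
  case True then show ?thesis unfolding visit_def acc_has_def by auto
next
  case False
  then have "i \<in> set (new_at M vb acc g)" unfolding new_at_def using assms by (auto simp del: upt_Suc)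
  then have "(i, g) \<in> set (visit M vb g acc)" unfolding visit_def by auto
  then show ?thesis unfolding acc_has_def using same_loop_refl by blast
qed

lemma fold_visit:
  assumes "good acc"
  shows "good (fold (visit M vb) ws acc) \<and> (\<exists>zs. fold (visit M vb) ws acc = acc @ zs) \<and>
    (\<forall>y\<in>set ws. \<forall>i\<le>ml. is_loop_at M vb i y \<longrightarrow> acc_has (fold (visit M vb) ws acc) i y)"
  using assms
proof (induction ws arbitrary: acc)
  case Nil then show ?case by simp
next
  case (Cons w ws)
  let ?acc1 = "visit M vb w acc"
  have g1: "good ?acc1" using visit_good Cons.prems by blast
  have p1: "\<exists>zs. ?acc1 = acc @ zs" unfolding visit_def by blast
  from Cons.IH[OF g1] obtain zs where
    r: "good (fold (visit M vb) ws ?acc1)" "fold (visit M vb) ws ?acc1 = ?acc1 @ zs"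
       "\<forall>y\<in>set ws. \<forall>i\<le>ml. is_loop_at M vb i y \<longrightarrow> acc_has (fold (visit M vb) ws ?acc1) i y" by blast
  have "\<forall>i\<le>ml. is_loop_at M vb i w \<longrightarrow> acc_has (fold (visit M vb) ws ?acc1) i w"
    using visit_has acc_has_app r(2) by metis
  then show ?case using r p1 by auto
qed

lemma prefix_nth: "p < length acc \<Longrightarrow> (acc @ zs) ! p = acc ! p"
  by (simp add: nth_append)

lemma ostep_Inv: assumes "Inv st" shows "Inv (ostep M vb st)"
proof (cases "fst st < length (snd st)")
  case False then show ?thesis using assms unfolding ostep_def by simp
next
  case True
  obtain k acc where st: "st = (k, acc)" by (cases st)
  have k: "k < length acc" using True st by simp
  obtain j g where jg: "acc ! k = (j, g)" by (cases "acc ! k")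
  have I: "good acc" "set (first_loops M vb) \<subseteq> set acc"
     "\<forall>p<k. \<forall>y\<in>lorbit M vb (fst (acc ! p)) (snd (acc ! p)). \<forall>i\<le>ml.
        is_loop_at M vb i y \<longrightarrow> acc_has acc i y"
    using assms st unfolding Inv_def by auto
  have "(j, g) \<in> set acc" using jg k by (metis nth_mem)
  then have gL: "g \<in> L j" using I(1) is_loop_L unfolding good_def by auto
  let ?acc' = "travel M vb (acc ! k) acc"
  have tr: "?acc' = fold (visit M vb) (lwalk M vb j g) acc" unfolding travel_def jg by simp
  obtain zs where F: "good ?acc'" "?acc' = acc @ zs"
    "\<forall>y\<in>set (lwalk M vb j g). \<forall>i\<le>ml. is_loop_at M vb i y \<longrightarrow> acc_has ?acc' i y"
    using fold_visit[OF I(1), of "lwalk M vb j g"] tr by auto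
  have os: "ostep M vb st = (Suc k, ?acc')" unfolding ostep_def st using k by simp
  have cl: "\<forall>p<Suc k. \<forall>y\<in>lorbit M vb (fst (?acc' ! p)) (snd (?acc' ! p)). \<forall>i\<le>ml.
        is_loop_at M vb i y \<longrightarrow> acc_has ?acc' i y"
  proof (intro allI impI ballI)
    fix p y i assume p: "p < Suc k" and y: "y \<in> lorbit M vb (fst (?acc' ! p)) (snd (?acc' ! p))"
      and i: "i \<le> ml" and il: "is_loop_at M vb i y"
    have pl: "p < length acc" using p k by simp
    have e: "?acc' ! p = acc ! p" using F(2) prefix_nth[OF pl] by simp
    show "acc_has ?acc' i y"
    proof (cases "p < k")
      case True
      then have "acc_has acc i y" using I(3) y e i il by auto
      then show ?thesis using F(2) acc_has_app by simp
    next
      case False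
      then have "p = k" using p by simp
      then have "y \<in> lorbit M vb j g" using y e jg by simp
      then have "y \<in> set (lwalk M vb j g)" using lwalk_set[OF gL] by simp
      then show ?thesis using F(3) i il by blast
    qed
  qed
  show ?thesis unfolding Inv_def os using F I cl k by auto
qed

lemma first_good: "good (first_loops M vb)"
proof -
  have "sorted_wrt RR (first_loops M vb)" unfolding first_loops_def by (rule news_sorted)
  moreover have "\<forall>(j, g)\<in>set (first_loops M vb). j \<le> ml \<and> is_loop_at M vb j g"
    unfolding first_loops_def by (auto simp del: upt_Suc)
  ultimately show ?thesis unfolding good_def by blast
qed

lemma Inv0: "Inv (0, first_loops M vb)"
  unfolding Inv_def using first_good by simp

lemma good_len: assumes "good acc" shows "length acc \<le> Suc ml * card A"
proof -
  have d: "distinct acc" using sorted_wrt_distinct[of RR acc] assms RR_irrefl unfolding good_def by blast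
  have "set acc \<subseteq> {0..ml} \<times> A" using assms unfolding good_def is_loop_at_def by auto
  then have "card (set acc) \<le> card ({0..ml} \<times> A)" using finA by (intro card_mono) auto
  also have "... = Suc ml * card A" by (simp add: card_cartesian_product)
  finally show ?thesis using distinct_card[OF d] by simp
qed

lemma iter_Inv: "Inv ((ostep M vb ^^ n) (0, first_loops M vb)) \<and>
   (n \<le> fst ((ostep M vb ^^ n) (0, first_loops M vb)) \<or>
    fst ((ostep M vb ^^ n) (0, first_loops M vb)) = length (snd ((ostep M vb ^^ n) (0, first_loops M vb))))"
proof (induction n)
  case 0 then show ?case using Inv0 by simp
next
  case (Suc n)
  let ?s = "(ostep M vb ^^ n) (0, first_loops M vb)"
  have I: "Inv ?s" using Suc by blast
  have I': "Inv (ostep M vb ?s)" using ostep_Inv[OF I] .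
  have "Suc n \<le> fst (ostep M vb ?s) \<or> fst (ostep M vb ?s) = length (snd (ostep M vb ?s))"
  proof (cases "fst ?s < length (snd ?s)")
    case True
    then have "fst (ostep M vb ?s) = Suc (fst ?s)" unfolding ostep_def by simp
    moreover have "n \<le> fst ?s" using Suc True by auto
    ultimately show ?thesis by simp
  next
    case False
    then have "ostep M vb ?s = ?s" unfolding ostep_def by simp
    moreover have "fst ?s = length (snd ?s)" using False I unfolding Inv_def by simp
    ultimately show ?thesis by simp
  qed
  then show ?case using I' by simp
qed

abbreviation "OL \<equiv> oriented_loops M vb"

lemma final: "Inv ((ostep M vb ^^ (Suc ml * card A + 1)) (0, first_loops M vb)) \<and>
    fst ((ostep M vb ^^ (Suc ml * card A + 1)) (0, first_loops M vb)) = length OL"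
proof -
  let ?n = "Suc ml * card A + 1"
  let ?s = "(ostep M vb ^^ ?n) (0, first_loops M vb)"
  have I: "Inv ?s" and d: "?n \<le> fst ?s \<or> fst ?s = length (snd ?s)" using iter_Inv by blast+
  have "snd ?s = OL" unfolding oriented_loops_def ..
  moreover have "fst ?s \<le> length (snd ?s)" "length (snd ?s) \<le> Suc ml * card A"
    using I good_len unfolding Inv_def by auto
  ultimately show ?thesis using I d by auto
qed

lemma OL_good: "good OL"
  using final unfolding Inv_def oriented_loops_def by blast

lemma OL_first: "set (first_loops M vb) \<subseteq> set OL"
  using final unfolding Inv_def oriented_loops_def by blast

lemma OL_closed: assumes "(j, g) \<in> set OL" "y \<in> lorbit M vb j g" "i \<le> ml" "is_loop_at M vb i y"
  shows "acc_has OL i y"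
proof -
  obtain p where p: "p < length OL" "OL ! p = (j, g)" using assms(1) by (metis in_set_conv_nth)
  show ?thesis using final p assms(2-4) unfolding Inv_def oriented_loops_def by fastforce
qed

end

context pm begin

lemma acc_has_orb: assumes "y \<in> L i" "z \<in> lorbit M vb i y"
  shows "acc_has acc i z \<longleftrightarrow> acc_has acc i y"
  using lorb_eq[OF assms] unfolding acc_has_def same_loop_def by simp

lemma acc_has_a1: assumes "good acc" "y \<in> L i"
  shows "acc_has acc i (a1 y) \<longleftrightarrow> acc_has acc i y"
proof -
  have O: "lorbit M vb i (a1 y) = a1 ` lorbit M vb i y" by (rule lorb_a1[OF assms(2)])
  have OA: "lorbit M vb i y \<subseteq> A" using lorb_L[OF assms(2)] unfolding L_def by blast
  have "same_loop M vb i (a1 y) h \<longleftrightarrow> same_loop M vb i y h" if hA: "h \<in> A" for h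
  proof -
    have 1: "h \<in> a1 ` lorbit M vb i y \<longleftrightarrow> a1 h \<in> lorbit M vb i y"
    proof
      assume "h \<in> a1 ` lorbit M vb i y"
      then obtain z where "z \<in> lorbit M vb i y" "h = a1 z" by blast
      then show "a1 h \<in> lorbit M vb i y" using OA ax by auto
    next
      assume "a1 h \<in> lorbit M vb i y"
      then have "a1 (a1 h) \<in> a1 ` lorbit M vb i y" by blast
      then show "h \<in> a1 ` lorbit M vb i y" using hA ax by simp
    qed
    have 2: "a1 h \<in> a1 ` lorbit M vb i y \<longleftrightarrow> h \<in> lorbit M vb i y"
    proof
      assume "a1 h \<in> a1 ` lorbit M vb i y"
      then obtain z where "z \<in> lorbit M vb i y" "a1 h = a1 z" by blast
      then have "a1 (a1 h) = a1 (a1 z)" by simp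
      then show "h \<in> lorbit M vb i y" using hA OA ax \<open>z \<in> _\<close> by auto
    qed blast
    show ?thesis unfolding same_loop_def O using 1 2 by blast
  qed
  moreover have "\<forall>(j, h)\<in>set acc. h \<in> A" using assms(1) unfolding good_def is_loop_at_def by auto
  ultimately show ?thesis unfolding acc_has_def by fastforce
qed

lemma acc_has_mem: assumes "good acc" "acc_has acc i y" "y \<in> L i"
  shows "\<exists>g. (i, g) \<in> set acc \<and> (y \<in> lorbit M vb i g \<or> a1 y \<in> lorbit M vb i g)"
proof -
  obtain g where g: "(i, g) \<in> set acc" "same_loop M vb i y g" using assms(2) unfolding acc_has_def by auto
  have gL: "g \<in> L i" using g(1) assms(1) is_loop_L unfolding good_def by auto
  show ?thesis
  proof (cases "g \<in> lorbit M vb i y")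
    case True
    then have "y \<in> lorbit M vb i g" using lorb_back[OF assms(3)] by blast
    then show ?thesis using g by blast
  next
    case False
    then have "a1 g \<in> lorbit M vb i y" using g(2) unfolding same_loop_def by blast
    then have "lorbit M vb i (a1 g) = lorbit M vb i y" using lorb_eq[OF assms(3)] by blast
    then have "lorbit M vb i y = a1 ` lorbit M vb i g" using lorb_a1[OF gL] by simp
    then have "y \<in> a1 ` lorbit M vb i g" using lorb_self by metis
    then obtain z where z: "z \<in> lorbit M vb i g" "y = a1 z" by blast
    have "z \<in> A" using z(1) lorb_L[OF gL] unfolding L_def by blast
    then have "a1 y = z" using z ax by simp
    then show ?thesis using g z by blast
  qed
qed

lemma is_loop_ml: assumes "is_loop_at M vb i y" shows "i \<le> ml"
proof -
  obtain z where z: "z \<in> lorbit M vb i y" "loopflag M vb i z" using assms unfolding is_loop_at_def by blast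
  have "y \<in> L i" using is_loop_L assms by blast
  then have zA: "z \<in> A" using z(1) lorb_L unfolding L_def by blast
  then have "a0 z \<in> A" using ax by blast
  then show ?thesis using z(2) ml_ge[OF zA] ml_ge[of "a0 z"] unfolding loopflag_def lab_lb
    by (cases "i = 0") auto
qed

lemma sg_not: assumes "\<not> (lb z = j \<and> lb (a0 z) = Suc j)" shows "sg j z = a1 (a0 z)"
  using sg_no assms by blast

lemma is_loop_a1: assumes "is_loop_at M vb i y" shows "is_loop_at M vb i (a1 y)"
proof -
  have yL: "y \<in> L i" using is_loop_L assms by blast
  have yA: "y \<in> A" "lb y \<le> i" using yL unfolding L_def by auto
  obtain z where z: "z \<in> lorbit M vb i y" "loopflag M vb i z" using assms unfolding is_loop_at_def by blast
  have zA: "z \<in> A" using z(1) lorb_L[OF yL] unfolding L_def by blast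
  have O: "lorbit M vb i (a1 y) = a1 ` lorbit M vb i y" by (rule lorb_a1[OF yL])
  have "\<exists>z'\<in>lorbit M vb i (a1 y). loopflag M vb i z'"
  proof (cases "i = 0")
    case True
    then have "loopflag M vb i (a1 z)" using z(2) lb_a1 zA unfolding loopflag_def lab_lb by simp
    then show ?thesis using O z(1) by blast
  next
    case False
    then have lf: "(lb z = i - 1 \<and> lb (a0 z) = i) \<or> (lb z = i \<and> lb (a0 z) = i - 1)"
      using z(2) unfolding loopflag_def lab_lb by simp
    then have "\<not> (lb z = i \<and> lb (a0 z) = Suc i)" using False by auto
    then have "sg i z = a1 (a0 z)" by (rule sg_not)
    then have "a1 (a0 z) \<in> lorbit M vb i y" using lorb_cl[OF z(1)] by simp
    then have "a1 (a1 (a0 z)) \<in> lorbit M vb i (a1 y)" using O by blast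
    then have "a0 z \<in> lorbit M vb i (a1 y)" using ax zA by simp
    moreover have "loopflag M vb i (a0 z)" using lf False ax zA unfolding loopflag_def lab_lb by auto
    ultimately show ?thesis by blast
  qed
  moreover have "a1 y \<in> A" "lb (a1 y) \<le> i" using yA ax lb_a1 by auto
  ultimately show ?thesis unfolding is_loop_at_def lab_lb by blast
qed

lemma closed2: assumes "(j, g) \<in> set OL" "y \<in> lorbit M vb j g \<or> a1 y \<in> lorbit M vb j g"
  "is_loop_at M vb i y" shows "acc_has OL i y"
proof -
  have i: "i \<le> ml" using is_loop_ml assms(3) by blast
  have yL: "y \<in> L i" using is_loop_L assms(3) by blast
  show ?thesis using assms(2)
  proof
    assume "y \<in> lorbit M vb j g" then show ?thesis using OL_closed assms(1,3) i by blast
  next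
    assume "a1 y \<in> lorbit M vb j g"
    then have "acc_has OL i (a1 y)" using OL_closed assms(1) i is_loop_a1[OF assms(3)] by blast
    then show ?thesis using acc_has_a1[OF OL_good yL] by simp
  qed
qed

abbreviation "rho \<equiv> \<lambda>x. a1 (a2 x)"

lemma rho_A: "rho ` A \<subseteq> A" using ax by auto
lemma rho_inj: "inj_on rho A"
  by (rule inj_onI) (metis ax(2,3,5,6))

lemma rho_n_A: "x \<in> A \<Longrightarrow> (rho ^^ n) x \<in> A" by (rule funpow_in[OF rho_A])

lemma rho_lb: "x \<in> A \<Longrightarrow> lb ((rho ^^ n) x) = lb x"
proof (induction n)
  case 0 then show ?case by simp
next
  case (Suc n)
  have "(rho ^^ Suc n) x = a1 (a2 ((rho ^^ n) x))" by simp
  then show ?case using Suc rho_n_A[OF Suc.prems, of n] lb_a1 lb_a2 ax by simp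
qed

lemma vertex_rho: assumes "h \<in> A" "w \<in> vertex_of M h"
  shows "\<exists>n. w = (rho ^^ n) h \<or> w = a2 ((rho ^^ n) h)"
proof -
  have "(h, w) \<in> (frel M {1,2})\<^sup>*" using assms(2) unfolding vertex_of_def orb_def by simp
  then show ?thesis
  proof (induction rule: rtrancl_induct)
    case base then show ?case by (metis funpow_0)
  next
    case (step w w')
    then obtain n where n: "w = (rho ^^ n) h \<or> w = a2 ((rho ^^ n) h)" by blast
    have wA: "w \<in> A" and w': "w' = a1 w \<or> w' = a2 w" using step(2) by (auto simp: frel_iff)
    have rA: "(rho ^^ n) h \<in> A" using rho_n_A assms(1) by blast
    show ?case using n
    proof
      assume wn: "w = (rho ^^ n) h"
      show ?thesis using w'
      proof
        assume "w' = a2 w" then show ?thesis using wn by blast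
      next
        assume w'1: "w' = a1 w"
        show ?thesis
        proof (cases n)
          case (Suc m)
          have "w = a1 (a2 ((rho ^^ m) h))" using wn Suc by simp
          then have "w' = a2 ((rho ^^ m) h)" using w'1 ax rho_n_A[OF assms(1), of m] by simp
          then show ?thesis by blast
        next
          case 0
          obtain p where p: "p > 0" "(rho ^^ p) h = h" using perm_period[OF finA rho_inj rho_A assms(1)] by blast
          have "(rho ^^ p) h = rho ((rho ^^ (p - 1)) h)" using p(1)
            by (metis Suc_pred' funpow.simps(2) o_apply)
          then have "a1 (a2 ((rho ^^ (p - 1)) h)) = h" using p by simp
          then have "a2 ((rho ^^ (p - 1)) h) = a1 h" using ax rho_n_A[OF assms(1), of "p - 1"] by (metis)
          then have "w' = a2 ((rho ^^ (p - 1)) h)" using w'1 wn 0 by simp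
          then show ?thesis by blast
        qed
      qed
    next
      assume wn: "w = a2 ((rho ^^ n) h)"
      show ?thesis using w'
      proof
        assume "w' = a1 w"
        then have "w' = (rho ^^ Suc n) h" using wn by simp
        then show ?thesis by blast
      next
        assume "w' = a2 w"
        then have "w' = (rho ^^ n) h" using wn ax rA by simp
        then show ?thesis by blast
      qed
    qed
  qed
qed

lemma descent: assumes "h \<in> A" "lb h = i" shows "is_loop_at M vb i h"
proof (cases i)
  case 0
  then have "loopflag M vb i h" using assms unfolding loopflag_def lab_lb by simp
  then show ?thesis using assms lorb_self unfolding is_loop_at_def lab_lb by blast
next
  case (Suc i')
  obtain w where w: "w \<in> vertex_of M h" "w \<in> A" "lb (a0 w) = i'" using lab_down assms Suc by blast
  obtain n where n: "w = (rho ^^ n) h \<or> w = a2 ((rho ^^ n) h)" using vertex_rho[OF assms(1) w(1)] by blast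
  have rA: "(rho ^^ n) h \<in> A" using rho_n_A assms(1) by blast
  have "lb (a0 ((rho ^^ n) h)) = i'" using n w(3) lb_a0a2[OF rA] by auto
  then have ex: "\<exists>n. \<not> (lb ((rho ^^ n) h) = i \<and> lb (a0 ((rho ^^ n) h)) = Suc i)"
    using Suc by (intro exI[of _ n]) auto
  define m where "m = (LEAST n. \<not> (lb ((rho ^^ n) h) = i \<and> lb (a0 ((rho ^^ n) h)) = Suc i))"
  have m1: "\<not> (lb ((rho ^^ m) h) = i \<and> lb (a0 ((rho ^^ m) h)) = Suc i)"
    unfolding m_def using ex by (rule LeastI_ex)
  have m2: "k < m \<Longrightarrow> lb ((rho ^^ k) h) = i \<and> lb (a0 ((rho ^^ k) h)) = Suc i" for k
    unfolding m_def using not_less_Least by blast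
  have it: "k \<le> m \<Longrightarrow> (sg i ^^ k) h = (rho ^^ k) h" for k
  proof (induction k)
    case 0 then show ?case by simp
  next
    case (Suc k)
    then have "(sg i ^^ k) h = (rho ^^ k) h" by simp
    moreover have "lb ((rho ^^ k) h) = i \<and> lb (a0 ((rho ^^ k) h)) = Suc i" using m2[of k] Suc.prems by simp
    then have "sg i ((rho ^^ k) h) = a1 (a2 ((rho ^^ k) h))" using sg_yes by blast
    ultimately show ?case by simp
  qed
  let ?z = "(rho ^^ m) h"
  have zA: "?z \<in> A" using rho_n_A assms(1) by blast
  have lz: "lb ?z = i" using rho_lb assms by simp
  then have "lb (a0 ?z) = i'" using m1 lab_a0[OF zA] Suc by auto
  then have "loopflag M vb i ?z" using lz Suc unfolding loopflag_def lab_lb by simp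
  moreover have "?z \<in> lorbit M vb i h" using it[of m] unfolding lorbit_def2 by (metis le_refl rangeI)
  ultimately show ?thesis using assms unfolding is_loop_at_def lab_lb by auto
qed

lemma up_loop: assumes "h \<in> A" "lb h = i" "lb (a0 h) = Suc i" shows "is_loop_at M vb (Suc i) h"
  using assms lorb_self unfolding is_loop_at_def loopflag_def lab_lb by fastforce

lemma chain: assumes "h \<in> A" "lb h = i" "lb (a0 h) = Suc i"
  shows "acc_has OL (Suc i) h \<longleftrightarrow> acc_has OL i h"
proof
  assume "acc_has OL (Suc i) h"
  moreover have "h \<in> L (Suc i)" using assms unfolding L_def by simp
  ultimately obtain g where "(Suc i, g) \<in> set OL" "h \<in> lorbit M vb (Suc i) g \<or> a1 h \<in> lorbit M vb (Suc i) g"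
    using acc_has_mem OL_good by blast
  then show "acc_has OL i h" using closed2 descent assms by blast
next
  assume "acc_has OL i h"
  moreover have "h \<in> L i" using assms unfolding L_def by simp
  ultimately obtain g where "(i, g) \<in> set OL" "h \<in> lorbit M vb i g \<or> a1 h \<in> lorbit M vb i g"
    using acc_has_mem OL_good by blast
  then show "acc_has OL (Suc i) h" using closed2 up_loop assms by blast
qed

lemma level0: assumes "y \<in> A" "y' \<in> A" "lb y = 0" "lb y' = 0"
  shows "acc_has OL 0 y' \<longleftrightarrow> acc_has OL 0 y"
proof -
  have "vertex_of M y' = vertex_of M y" using assms lab0 by simp
  moreover have "y' \<in> vertex_of M y'" unfolding vertex_of_def by (rule orb_self)
  ultimately have "y' \<in> vertex_of M y" by simp
  then obtain n where n: "y' = (rho ^^ n) y \<or> y' = a2 ((rho ^^ n) y)" using vertex_rho assms(1) by blast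
  have it: "(sg 0 ^^ k) y = (rho ^^ k) y" for k
  proof (induction k)
    case 0 then show ?case by simp
  next
    case (Suc k)
    have rA: "(rho ^^ k) y \<in> A" using rho_n_A assms(1) by blast
    have l: "lb ((rho ^^ k) y) = 0" using rho_lb assms by simp
    then have "lb (a0 ((rho ^^ k) y)) = Suc 0" using lab_a0[OF rA] by auto
    then have "sg 0 ((rho ^^ k) y) = a1 (a2 ((rho ^^ k) y))" using l sg_yes by blast
    then show ?case using Suc by simp
  qed
  have yL: "y \<in> L 0" using assms unfolding L_def by simp
  have y'L: "y' \<in> L 0" using assms unfolding L_def by simp
  show ?thesis using n
  proof
    assume "y' = (rho ^^ n) y"
    then have "y' \<in> lorbit M vb 0 y" using it unfolding lorbit_def2 by (metis rangeI)
    then show ?thesis using acc_has_orb[OF yL] by blast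
  next
    assume e: "y' = a2 ((rho ^^ n) y)"
    have rA: "(rho ^^ n) y \<in> A" using rho_n_A assms(1) by blast
    have "a1 y' = (rho ^^ Suc n) y" using e by simp
    then have "a1 y' \<in> lorbit M vb 0 y" using it unfolding lorbit_def2 by (metis rangeI)
    then have "acc_has OL 0 (a1 y') \<longleftrightarrow> acc_has OL 0 y" using acc_has_orb[OF yL] by blast
    then show ?thesis using acc_has_a1[OF OL_good y'L] by simp
  qed
qed

definition r0 where "r0 = (SOME x. x \<in> A \<and> vertex_of M x = vb)"
lemma r0: "r0 \<in> A" "lb r0 = 0"
proof -
  have "r0 \<in> A \<and> vertex_of M r0 = vb" unfolding r0_def using vb_ex by (metis (mono_tags, lifting) someI_ex)
  then show "r0 \<in> A" "lb r0 = 0" using lab0 by auto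
qed

lemma equiv0: "is_loop_at M vb i y \<Longrightarrow> (acc_has OL i y \<longleftrightarrow> acc_has OL 0 r0)"
proof (induction i arbitrary: y)
  case 0
  then have "y \<in> A" "lb y = 0" unfolding is_loop_at_def lab_lb by auto
  then show ?case using level0 r0 by blast
next
  case (Suc i)
  have yL: "y \<in> L (Suc i)" using is_loop_L Suc.prems by blast
  obtain z where z: "z \<in> lorbit M vb (Suc i) y" "loopflag M vb (Suc i) z" using Suc.prems unfolding is_loop_at_def by blast
  have zL: "z \<in> L (Suc i)" using z(1) lorb_L[OF yL] by blast
  have zA: "z \<in> A" using zL unfolding L_def by blast
  have e1: "acc_has OL (Suc i) y \<longleftrightarrow> acc_has OL (Suc i) z" using acc_has_orb[OF yL z(1)] by simp
  have lf: "(lb z = i \<and> lb (a0 z) = Suc i) \<or> (lb z = Suc i \<and> lb (a0 z) = i)"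
    using z(2) unfolding loopflag_def lab_lb by simp
  obtain h where h: "h \<in> A" "lb h = i" "lb (a0 h) = Suc i" "acc_has OL (Suc i) z \<longleftrightarrow> acc_has OL (Suc i) h"
  proof (cases "lb z = i \<and> lb (a0 z) = Suc i")
    case True then show ?thesis using that zA by blast
  next
    case False
    then have d: "lb z = Suc i" "lb (a0 z) = i" using lf by auto
    then have "\<not> (lb z = Suc i \<and> lb (a0 z) = Suc (Suc i))" by simp
    then have s: "sg (Suc i) z = a1 (a0 z)" by (rule sg_not)
    have a0A: "a0 z \<in> A" using ax zA by blast
    have "a1 (sg (Suc i) z) = a0 z" using s ax a0A by simp
    moreover have "a1 (sg (Suc i) z) \<in> lorbit M vb (Suc i) (a1 z)"
      using lorb_a1[OF zL] lorb_cl[OF lorb_self[of z "Suc i"]] by blast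
    ultimately have "a0 z \<in> lorbit M vb (Suc i) (a1 z)" by simp
    then have "acc_has OL (Suc i) (a0 z) \<longleftrightarrow> acc_has OL (Suc i) (a1 z)"
      using acc_has_orb L_a1[OF zL] by blast
    also have "... \<longleftrightarrow> acc_has OL (Suc i) z" using acc_has_a1[OF OL_good zL] .
    finally show ?thesis using that[of "a0 z"] a0A d ax zA by simp
  qed
  have "acc_has OL (Suc i) h \<longleftrightarrow> acc_has OL i h" using chain h by blast
  also have "... \<longleftrightarrow> acc_has OL 0 r0" using Suc.IH descent h by blast
  finally show ?case using e1 h(4) by simp
qed

lemma root_props: "root' M vb \<in> A \<and> lb (a0 (root' M vb)) = Suc (lb (root' M vb))"
proof (cases "eps M vb")
  case True
  then have "lb (rt M) < lb (a0 (rt M))" unfolding eps_def lab_lb .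
  then show ?thesis using True rtA lab_a0[OF rtA] unfolding root'_def by auto
next
  case False
  then have "\<not> lb (rt M) < lb (a0 (rt M))" unfolding eps_def lab_lb .
  then have l: "lb (rt M) = Suc (lb (a0 (rt M)))" using lab_a0[OF rtA] by auto
  have r: "root' M vb = a0 (a2 (rt M))" using False unfolding root'_def by simp
  have A1: "a0 (a2 (rt M)) \<in> A" using ax rtA by blast
  have "lb (a0 (a2 (rt M))) = lb (a0 (rt M))" using lb_a0a2 rtA by blast
  moreover have "a0 (a0 (a2 (rt M))) = a2 (rt M)" using ax rtA by simp
  moreover have "lb (a2 (rt M)) = lb (rt M)" using lb_a2 rtA by blast
  ultimately show ?thesis using r A1 l by simp
qed

lemma complete: "is_loop_at M vb i y \<Longrightarrow> acc_has OL i y"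
proof -
  assume a: "is_loop_at M vb i y"
  let ?r = "root' M vb" let ?t = "Suc (lb ?r)"
  have rl: "is_loop_at M vb ?t ?r" using up_loop root_props by blast
  then have "?t \<le> ml" by (rule is_loop_ml)
  then have "(?t, ?r) \<in> set (first_loops M vb)" unfolding first_loops_def using rl
    by (auto simp del: upt_Suc)
  then have "(?t, ?r) \<in> set OL" using OL_first by blast
  then have "acc_has OL ?t ?r" unfolding acc_has_def using same_loop_refl by blast
  then have "acc_has OL 0 r0" using equiv0 rl by blast
  then show ?thesis using equiv0 a by blast
qed

end

lemma tele:
  assumes fin: "finite T" and inj: "inj_on s T"
    and ex: "\<And>x. x \<in> T \<Longrightarrow> s x \<notin> T \<Longrightarrow> f (s x)"
    and en: "\<And>y. y \<in> T \<Longrightarrow> y \<notin> s ` T \<Longrightarrow> f y"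
  shows "card {x\<in>T. \<not> f x \<and> f (s x)} = card {x\<in>T. f x \<and> \<not> f (s x)}"
proof -
  let ?B = "s ` T"
  have cB: "card ?B = card T" using card_image[OF inj] .
  have finB: "finite ?B" using fin by simp
  have c1: "card ?B = card (?B \<inter> T) + card (?B - T)"
    using finB by (metis card_Int_Diff)
  have c2: "card T = card (?B \<inter> T) + card (T - ?B)"
    using fin by (metis Int_commute card_Int_Diff)
  have d: "card (?B - T) = card (T - ?B)" using c1 c2 cB by simp
  have e1: "card {y\<in>?B. f y} = card {y\<in>?B \<inter> T. f y} + card (?B - T)"
  proof -
    have "{y\<in>?B. f y} = {y\<in>?B \<inter> T. f y} \<union> (?B - T)" using ex by auto
    moreover have "{y\<in>?B \<inter> T. f y} \<inter> (?B - T) = {}" by auto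
    ultimately show ?thesis using finB by (simp add: card_Un_disjoint)
  qed
  have e2: "card {y\<in>T. f y} = card {y\<in>?B \<inter> T. f y} + card (T - ?B)"
  proof -
    have "{y\<in>T. f y} = {y\<in>?B \<inter> T. f y} \<union> (T - ?B)" using en by auto
    moreover have "{y\<in>?B \<inter> T. f y} \<inter> (T - ?B) = {}" by auto
    ultimately show ?thesis using fin by (simp add: card_Un_disjoint)
  qed
  have e3: "card {x\<in>T. f (s x)} = card {y\<in>?B. f y}"
  proof -
    have "{y\<in>?B. f y} = s ` {x\<in>T. f (s x)}" by auto
    moreover have "inj_on s {x\<in>T. f (s x)}" using inj by (rule inj_on_subset) auto
    ultimately show ?thesis by (simp add: card_image)
  qed
  have tot: "card {x\<in>T. f (s x)} = card {x\<in>T. f x}" using e1 e2 e3 d by simp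
  have s1: "card {x\<in>T. f (s x)} = card {x\<in>T. f x \<and> f (s x)} + card {x\<in>T. \<not> f x \<and> f (s x)}"
  proof -
    have "{x\<in>T. f (s x)} = {x\<in>T. f x \<and> f (s x)} \<union> {x\<in>T. \<not> f x \<and> f (s x)}" by auto
    then show ?thesis using fin by (simp add: card_Un_disjoint disjoint_iff)
  qed
  have s2: "card {x\<in>T. f x} = card {x\<in>T. f x \<and> f (s x)} + card {x\<in>T. f x \<and> \<not> f (s x)}"
  proof -
    have "{x\<in>T. f x} = {x\<in>T. f x \<and> f (s x)} \<union> {x\<in>T. f x \<and> \<not> f (s x)}" by auto
    then show ?thesis using fin by (simp add: card_Un_disjoint disjoint_iff)
  qed
  show ?thesis using tot s1 s2 by simp
qed

context pm begin

definition CC :: "nat \<Rightarrow> 'f set" where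
  "CC j = (\<Union>g\<in>{g. (j, g) \<in> set OL}. lorbit M vb j g)"

lemma OL_L: "(j, g) \<in> set OL \<Longrightarrow> g \<in> L j"
  using OL_good is_loop_L unfolding good_def by auto

lemma CC_L: "CC j \<subseteq> L j"
  unfolding CC_def using OL_L lorb_L by blast

lemma CC_cl: "x \<in> CC j \<Longrightarrow> sg j x \<in> CC j"
  unfolding CC_def using lorb_cl by blast

lemma CC_pred: assumes "y \<in> CC j" shows "\<exists>x\<in>CC j. sg j x = y"
proof -
  obtain g where g: "(j, g) \<in> set OL" "y \<in> lorbit M vb j g" using assms unfolding CC_def by blast
  obtain z where z: "z \<in> lorbit M vb j g" "sg j z = y" using lorb_pred[OF OL_L[OF g(1)] g(2)] by blast
  then have "z \<in> CC j" using g(1) unfolding CC_def by blast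
  then show ?thesis using z by blast
qed

lemma up_sg: assumes "lb h = i" shows "sg (Suc i) h = a1 (a0 h)"
  using assms by (intro sg_not) simp

lemma one_a: assumes "h \<in> A" "lb h = i" "lb (a0 h) = Suc i"
  shows "h \<in> CC (Suc i) \<or> a0 h \<in> CC (Suc i)"
proof -
  have hL: "h \<in> L (Suc i)" using assms unfolding L_def by simp
  have "acc_has OL (Suc i) h" using complete up_loop assms by blast
  then obtain g where g: "(Suc i, g) \<in> set OL" "h \<in> lorbit M vb (Suc i) g \<or> a1 h \<in> lorbit M vb (Suc i) g"
    using acc_has_mem OL_good hL by blast
  show ?thesis using g(2)
  proof
    assume "h \<in> lorbit M vb (Suc i) g" then show ?thesis using g(1) unfolding CC_def by blast
  next
    assume a: "a1 h \<in> lorbit M vb (Suc i) g"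
    have "lorbit M vb (Suc i) (a1 h) = lorbit M vb (Suc i) g" using lorb_eq[OF OL_L[OF g(1)] a] .
    then have O: "lorbit M vb (Suc i) g = a1 ` lorbit M vb (Suc i) h" using lorb_a1[OF hL] by simp
    have "sg (Suc i) h \<in> lorbit M vb (Suc i) h" by (rule lorb_cl[OF lorb_self])
    then have "a1 (sg (Suc i) h) \<in> lorbit M vb (Suc i) g" using O by blast
    moreover have "a1 (sg (Suc i) h) = a0 h" using up_sg[OF assms(2)] ax assms(1) by simp
    ultimately show ?thesis using g(1) unfolding CC_def by auto
  qed
qed

lemma one_b: assumes "h \<in> A" "lb h = i" "lb (a0 h) = Suc i"
  shows "\<not> (h \<in> CC (Suc i) \<and> a0 h \<in> CC (Suc i))"
proof
  assume H: "h \<in> CC (Suc i) \<and> a0 h \<in> CC (Suc i)"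
  obtain g1 where g1: "(Suc i, g1) \<in> set OL" "h \<in> lorbit M vb (Suc i) g1"
    using H unfolding CC_def by blast
  obtain g2 where g2: "(Suc i, g2) \<in> set OL" "a0 h \<in> lorbit M vb (Suc i) g2"
    using H unfolding CC_def by blast
  let ?O = "lorbit M vb (Suc i)"
  have hL: "h \<in> L (Suc i)" using assms unfolding L_def by simp
  have g1L: "g1 \<in> L (Suc i)" using OL_L g1(1) by blast
  have g2L: "g2 \<in> L (Suc i)" using OL_L g2(1) by blast
  have O1: "?O h = ?O g1" by (rule lorb_eq[OF g1L g1(2)])
  have Oa1: "?O (a1 h) = a1 ` ?O h" by (rule lorb_a1[OF hL])
  have "sg (Suc i) h \<in> ?O h" by (rule lorb_cl[OF lorb_self])
  then have "a1 (sg (Suc i) h) \<in> a1 ` ?O h" by (rule imageI)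
  moreover have "a1 (sg (Suc i) h) = a0 h" using up_sg[OF assms(2)] ax assms(1) by simp
  ultimately have "a0 h \<in> ?O (a1 h)" using Oa1 by simp
  then have E1: "?O (a0 h) = ?O (a1 h)" by (rule lorb_eq[OF L_a1[OF hL]])
  have E2: "?O (a0 h) = ?O g2" by (rule lorb_eq[OF g2L g2(2)])
  have O2: "?O g2 = a1 ` ?O g1" using E1 E2 Oa1 O1 by simp
  have g1A: "?O g1 \<subseteq> A" using lorb_L[OF g1L] unfolding L_def by blast
  have s21: "same_loop M vb (Suc i) g2 g1"
  proof -
    have "g1 \<in> ?O g1" by (rule lorb_self)
    then have "a1 g1 \<in> ?O g2" unfolding O2 by (rule imageI)
    then show ?thesis unfolding same_loop_def by blast
  qed
  have s12: "same_loop M vb (Suc i) g1 g2"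
  proof -
    have "g2 \<in> ?O g2" by (rule lorb_self)
    then have "g2 \<in> a1 ` ?O g1" unfolding O2 .
    then obtain z where z: "z \<in> ?O g1" "g2 = a1 z" by blast
    have zA: "z \<in> A" using z(1) g1A by blast
    have "a1 g2 = z" using z(2) ax(5)[OF zA] by simp
    then show ?thesis using z(1) unfolding same_loop_def by blast
  qed
  show False
  proof (cases "g1 = g2")
    case True
    have e: "?O h = a1 ` ?O h" using O1 O2 True by metis
    have "h \<in> a1 ` ?O h" by (rule eqset_imp_iff[OF e, THEN iffD1, OF lorb_self])
    then obtain z where z: "z \<in> ?O h" "h = a1 z" by blast
    have "z \<in> L (Suc i)" using z(1) lorb_L[OF hL] by blast
    then have zA: "z \<in> A" unfolding L_def by blast
    then have "a1 h = z" using z(2) ax(5)[OF zA] by simp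
    then have "a1 h \<in> ?O h" using z(1) by simp
    then show False using lorb_disj[OF hL] by blast
  next
    case False
    then have ne: "(Suc i, g1) \<noteq> (Suc i, g2)" by simp
    have sw: "sorted_wrt RR OL" using OL_good unfolding good_def by blast
    have "RR (Suc i, g1) (Suc i, g2) \<or> RR (Suc i, g2) (Suc i, g1)"
      by (rule sorted_wrt_two[OF sw g1(1) g2(1) ne])
    then show False using s21 s12 unfolding RR_def by auto
  qed
qed

lemma inF: "y \<in> face_of M x \<longleftrightarrow> face_of M y = face_of M x"
proof
  assume "y \<in> face_of M x" then show "face_of M y = face_of M x" unfolding face_of_def by (rule orb_eq)
next
  assume "face_of M y = face_of M x"
  moreover have "y \<in> face_of M y" unfolding face_of_def by (rule orb_self)
  ultimately show "y \<in> face_of M x" by simp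
qed

lemma face_A: "x \<in> A \<Longrightarrow> face_of M x \<subseteq> A"
  unfolding face_of_def by (rule orb_A)

end

context pm begin

lemma F_a0: "y \<in> A \<Longrightarrow> a0 y \<in> face_of M x \<longleftrightarrow> y \<in> face_of M x"
  unfolding inF[of "a0 y"] inF[of y] face_a0 by (rule refl)
lemma F_a1: "y \<in> A \<Longrightarrow> a1 y \<in> face_of M x \<longleftrightarrow> y \<in> face_of M x"
  unfolding inF[of "a1 y"] inF[of y] face_a1 by (rule refl)

lemma finF: "x0 \<in> A \<Longrightarrow> finite (face_of M x0)"
  using face_A finA finite_subset by blast

lemma level_card: assumes x0: "x0 \<in> A"
  shows "card {x \<in> face_of M x0. lb x = i \<and> lb (a0 x) = Suc i} =
     2 * card {x \<in> face_of M x0. lb x = i \<and> lb (a0 x) = Suc i \<and> x \<in> CC (Suc i)}"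
proof -
  let ?F = "face_of M x0" and ?C = "CC (Suc i)" and ?s = "sg (Suc i)"
  let ?T = "?F \<inter> ?C"
  let ?S = "{x \<in> ?F. lb x = i \<and> lb (a0 x) = Suc i}"
  let ?Up = "{x \<in> ?F. lb x = i \<and> lb (a0 x) = Suc i \<and> x \<in> ?C}"
  let ?Dn = "{x \<in> ?F. lb x = Suc i \<and> lb (a0 x) = i \<and> x \<in> ?C}"
  have FA: "?F \<subseteq> A" using face_A x0 by blast
  have finT: "finite ?T" using finF[OF x0] by simp
  have TL: "?T \<subseteq> L (Suc i)" using CC_L by blast
  have injT: "inj_on ?s ?T" by (rule inj_on_subset[OF sg_inj TL])
  have TA: "\<And>x. x \<in> ?T \<Longrightarrow> x \<in> A \<and> lb x \<le> Suc i" using TL unfolding L_def by blast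
  have tl: "card {x\<in>?T. \<not> Suc i \<le> lb x \<and> Suc i \<le> lb (?s x)} = card {x\<in>?T. Suc i \<le> lb x \<and> \<not> Suc i \<le> lb (?s x)}"
  proof (rule tele[OF finT injT])
    fix x assume xT: "x \<in> ?T" and nx: "?s x \<notin> ?T"
    have xA: "x \<in> A" using TA xT by blast
    have "?s x \<in> ?C" using CC_cl xT by blast
    then have nF: "?s x \<notin> ?F" using nx by blast
    show "Suc i \<le> lb (?s x)"
    proof (cases "lb x = Suc i \<and> lb (a0 x) = Suc (Suc i)")
      case True
      then have "?s x = a1 (a2 x)" using sg_yes by blast
      then show ?thesis using True lb_a1 lb_a2 ax xA by simp
    next
      case False
      then have "?s x = a1 (a0 x)" using sg_not by blast
      moreover have "a1 (a0 x) \<in> ?F" using F_a1 F_a0 xA ax xT by simp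
      ultimately show ?thesis using nF by simp
    qed
  next
    fix y assume yT: "y \<in> ?T" and ny: "y \<notin> ?s ` ?T"
    have "y \<in> ?C" using yT by blast
    then obtain x where x: "x \<in> ?C" "?s x = y" using CC_pred by blast
    have xA: "x \<in> A" using x(1) CC_L unfolding L_def by blast
    have xF: "x \<notin> ?F" using x ny by blast
    show "Suc i \<le> lb y"
    proof (cases "lb x = Suc i \<and> lb (a0 x) = Suc (Suc i)")
      case True
      then have "y = a1 (a2 x)" using sg_yes x(2) by metis
      then show ?thesis using True lb_a1 lb_a2 ax xA by simp
    next
      case False
      then have "y = a1 (a0 x)" using sg_not x(2) by metis
      then have "x \<in> ?F" using F_a1 F_a0 xA ax yT by simp
      then show ?thesis using xF by simp
    qed
  qed
  have e1: "{x\<in>?T. \<not> Suc i \<le> lb x \<and> Suc i \<le> lb (?s x)} = ?Up"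
  proof (intro set_eqI iffI)
    fix x assume a: "x \<in> {x\<in>?T. \<not> Suc i \<le> lb x \<and> Suc i \<le> lb (?s x)}"
    then have xA: "x \<in> A" using TA by blast
    have "\<not> (lb x = Suc i \<and> lb (a0 x) = Suc (Suc i))" using a by simp
    then have "?s x = a1 (a0 x)" using sg_not by blast
    then have "Suc i \<le> lb (a0 x)" using a lb_a1 ax xA by simp
    then have "lb x = i \<and> lb (a0 x) = Suc i" using a lab_a0[OF xA] by auto
    then show "x \<in> ?Up" using a by simp
  next
    fix x assume a: "x \<in> ?Up"
    then have xA: "x \<in> A" using FA by blast
    have "\<not> (lb x = Suc i \<and> lb (a0 x) = Suc (Suc i))" using a by simp
    then have "?s x = a1 (a0 x)" using sg_not by blast
    then show "x \<in> {x\<in>?T. \<not> Suc i \<le> lb x \<and> Suc i \<le> lb (?s x)}" using a lb_a1 ax xA by simp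
  qed
  have e2: "{x\<in>?T. Suc i \<le> lb x \<and> \<not> Suc i \<le> lb (?s x)} = ?Dn"
  proof (intro set_eqI iffI)
    fix x assume a: "x \<in> {x\<in>?T. Suc i \<le> lb x \<and> \<not> Suc i \<le> lb (?s x)}"
    then have xA: "x \<in> A" and l: "lb x = Suc i" using TA by force+
    show "x \<in> ?Dn"
    proof (cases "lb x = Suc i \<and> lb (a0 x) = Suc (Suc i)")
      case True
      then have "?s x = a1 (a2 x)" using sg_yes by blast
      then show ?thesis using a True lb_a1 lb_a2 ax xA by simp
    next
      case False
      then have "?s x = a1 (a0 x)" using sg_not by blast
      then have "lb (a0 x) \<le> i" using a lb_a1 ax xA by simp
      then have "lb (a0 x) = i" using l lab_a0[OF xA] by auto
      then show ?thesis using a l by simp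
    qed
  next
    fix x assume a: "x \<in> ?Dn"
    then have xA: "x \<in> A" using FA by blast
    have "\<not> (lb x = Suc i \<and> lb (a0 x) = Suc (Suc i))" using a by simp
    then have "?s x = a1 (a0 x)" using sg_not by blast
    then show "x \<in> {x\<in>?T. Suc i \<le> lb x \<and> \<not> Suc i \<le> lb (?s x)}" using a lb_a1 ax xA by simp
  qed
  have cUD: "card ?Up = card ?Dn" using tl e1 e2 by simp
  have Dn_img: "?Dn = a0 ` (?S - ?C)"
  proof (intro set_eqI iffI)
    fix x assume a: "x \<in> ?Dn"
    then have xA: "x \<in> A" using FA by blast
    have h: "a0 x \<in> A" "lb (a0 x) = i" "lb (a0 (a0 x)) = Suc i" using a xA ax by auto
    have xx: "a0 (a0 x) = x" using ax xA by simp
    have "x \<in> ?C" using a by blast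
    then have "a0 (a0 x) \<in> ?C" using xx by simp
    then have "a0 x \<notin> ?C" using one_b[OF h] by blast
    moreover have "a0 x \<in> ?F" using F_a0 xA a by blast
    ultimately have "a0 x \<in> ?S - ?C" using h by simp
    moreover have "x = a0 (a0 x)" using ax xA by simp
    ultimately show "x \<in> a0 ` (?S - ?C)" by blast
  next
    fix x assume "x \<in> a0 ` (?S - ?C)"
    then obtain h where h: "h \<in> ?S" "h \<notin> ?C" "x = a0 h" by blast
    have hA: "h \<in> A" using h FA by blast
    have "lb h = i" "lb (a0 h) = Suc i" using h by auto
    then have "a0 h \<in> ?C" using one_a[OF hA] h(2) by blast
    moreover have "a0 h \<in> ?F" using F_a0 hA h by blast
    ultimately show "x \<in> ?Dn" using h hA ax by simp
  qed
  have "inj_on a0 (?S - ?C)"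
  proof (rule inj_onI)
    fix u v assume uv: "u \<in> ?S - ?C" "v \<in> ?S - ?C" "a0 u = a0 v"
    have uA: "u \<in> A" using uv(1) FA by blast
    have vA: "v \<in> A" using uv(2) FA by blast
    have "a0 (a0 u) = a0 (a0 v)" using uv(3) by simp
    then show "u = v" using ax(4)[OF uA] ax(4)[OF vA] by simp
  qed
  then have "card (a0 ` (?S - ?C)) = card (?S - ?C)" by (rule card_image)
  then have cD: "card ?Dn = card (?S - ?C)" using Dn_img by simp
  have "?S \<inter> ?C = ?Up" by auto
  moreover have "card ?S = card (?S \<inter> ?C) + card (?S - ?C)"
    using finF[OF x0] by (simp add: card_Int_Diff)
  ultimately show ?thesis using cUD cD by simp
qed

end

context pm begin

definition UpAll where "UpAll = {h \<in> A. lb (a0 h) = Suc (lb h) \<and> h \<in> CC (Suc (lb h))}"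

lemma face_sum: assumes x0: "x0 \<in> A"
  shows "card {h \<in> face_of M x0. lb (a0 h) = Suc (lb h)} = 2 * card (UpAll \<inter> face_of M x0)"
proof -
  let ?F = "face_of M x0"
  let ?S = "\<lambda>i. {x \<in> ?F. lb x = i \<and> lb (a0 x) = Suc i}"
  let ?U = "\<lambda>i. {x \<in> ?F. lb x = i \<and> lb (a0 x) = Suc i \<and> x \<in> CC (Suc i)}"
  have FA: "?F \<subseteq> A" using face_A x0 by blast
  have finF': "finite ?F" using finF x0 by blast
  have e1: "{h \<in> ?F. lb (a0 h) = Suc (lb h)} = (\<Union>i\<in>{..ml}. ?S i)"
  proof (intro set_eqI iffI)
    fix h assume h: "h \<in> {h \<in> ?F. lb (a0 h) = Suc (lb h)}"
    then have "h \<in> A" using FA by blast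
    then have "lb h \<le> ml" by (rule ml_ge)
    then show "h \<in> (\<Union>i\<in>{..ml}. ?S i)" using h by blast
  qed blast
  have e2: "UpAll \<inter> ?F = (\<Union>i\<in>{..ml}. ?U i)"
  proof (intro set_eqI iffI)
    fix h assume h: "h \<in> UpAll \<inter> ?F"
    then have "h \<in> A" using FA by blast
    then have "lb h \<le> ml" by (rule ml_ge)
    then show "h \<in> (\<Union>i\<in>{..ml}. ?U i)" using h unfolding UpAll_def by blast
  next
    fix h assume "h \<in> (\<Union>i\<in>{..ml}. ?U i)"
    then obtain i where "h \<in> ?F" "lb h = i" "lb (a0 h) = Suc i" "h \<in> CC (Suc i)" by blast
    then show "h \<in> UpAll \<inter> ?F" unfolding UpAll_def using FA by blast
  qed
  have c1: "card (\<Union>i\<in>{..ml}. ?S i) = (\<Sum>i\<in>{..ml}. card (?S i))"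
    by (rule card_UN_disjoint) (use finF' in auto)
  have c2: "card (\<Union>i\<in>{..ml}. ?U i) = (\<Sum>i\<in>{..ml}. card (?U i))"
    by (rule card_UN_disjoint) (use finF' in auto)
  have "(\<Sum>i\<in>{..ml}. card (?S i)) = (\<Sum>i\<in>{..ml}. 2 * card (?U i))"
    using level_card[OF x0] by simp
  also have "... = 2 * (\<Sum>i\<in>{..ml}. card (?U i))" by (simp add: sum_distrib_left)
  finally show ?thesis using e1 e2 c1 c2 by simp
qed

lemma face_half: assumes x0: "x0 \<in> A"
  shows "card (face_of M x0) = 2 * card {h \<in> face_of M x0. lb (a0 h) = Suc (lb h)}"
proof -
  let ?F = "face_of M x0"
  let ?S = "{h \<in> ?F. lb (a0 h) = Suc (lb h)}"
  have FA: "?F \<subseteq> A" using face_A x0 by blast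
  have finF': "finite ?F" using finF x0 by blast
  have un: "?F = ?S \<union> a0 ` ?S"
  proof (intro set_eqI iffI)
    fix x assume xF: "x \<in> ?F"
    then have xA: "x \<in> A" using FA by blast
    show "x \<in> ?S \<union> a0 ` ?S"
    proof (cases "lb (a0 x) = Suc (lb x)")
      case True then show ?thesis using xF by blast
    next
      case False
      then have "lb x = Suc (lb (a0 x))" using lab_a0[OF xA] by auto
      moreover have "a0 (a0 x) = x" using ax xA by simp
      moreover have "a0 x \<in> ?F" using F_a0 xA xF by blast
      ultimately have "a0 x \<in> ?S" by simp
      moreover have "x = a0 (a0 x)" using ax xA by simp
      ultimately show ?thesis by blast
    qed
  next
    fix x assume "x \<in> ?S \<union> a0 ` ?S"
    then show "x \<in> ?F"
    proof
      assume "x \<in> ?S" then show ?thesis by blast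
    next
      assume "x \<in> a0 ` ?S"
      then obtain h where h: "h \<in> ?S" "x = a0 h" by blast
      have "h \<in> A" using h FA by blast
      then show ?thesis using h F_a0 by blast
    qed
  qed
  have dj: "?S \<inter> a0 ` ?S = {}"
  proof (rule ccontr)
    assume "?S \<inter> a0 ` ?S \<noteq> {}"
    then obtain h where h: "h \<in> ?S" "a0 h \<in> ?S" by blast
    have "h \<in> A" using h FA by blast
    then have "a0 (a0 h) = h" using ax by simp
    then show False using h by simp
  qed
  have inj: "inj_on a0 ?S"
  proof (rule inj_onI)
    fix u v assume uv: "u \<in> ?S" "v \<in> ?S" "a0 u = a0 v"
    have uA: "u \<in> A" using uv(1) FA by blast
    have vA: "v \<in> A" using uv(2) FA by blast
    have "a0 (a0 u) = a0 (a0 v)" using uv(3) by simp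
    then show "u = v" using ax(4)[OF uA] ax(4)[OF vA] by simp
  qed
  have fS: "finite ?S" using finF' by simp
  have fS2: "finite (a0 ` ?S)" using fS by simp
  have "card (?S \<union> a0 ` ?S) = card ?S + card (a0 ` ?S)" by (rule card_Un_disjoint[OF fS fS2 dj])
  moreover have "card ?F = card (?S \<union> a0 ` ?S)" by (rule arg_cong[OF un])
  ultimately have "card ?F = card ?S + card (a0 ` ?S)" by simp
  then show ?thesis using card_image[OF inj] by simp
qed

lemma corner_card: assumes x0: "x0 \<in> A"
  shows "card (face_of M x0) = 2 * face_degree M (face_of M x0)"
proof -
  let ?F = "face_of M x0"
  have FA: "?F \<subseteq> A" using face_A x0 by blast
  have finF': "finite ?F" using finF x0 by blast
  have U: "\<Union>(corner_of M ` ?F) = ?F"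
  proof (intro set_eqI iffI)
    fix x assume "x \<in> \<Union>(corner_of M ` ?F)"
    then obtain y where y: "y \<in> ?F" "x = y \<or> x = a1 y" unfolding corner_of_def by blast
    have "y \<in> A" using y FA by blast
    then show "x \<in> ?F" using y F_a1 by blast
  next
    fix x assume "x \<in> ?F" then show "x \<in> \<Union>(corner_of M ` ?F)" unfolding corner_of_def by blast
  qed
  have "2 * card (corner_of M ` ?F) = card (\<Union>(corner_of M ` ?F))"
  proof (rule card_partition)
    show "finite (corner_of M ` ?F)" using finF' by simp
    show "finite (\<Union>(corner_of M ` ?F))" using U finF' by simp
    show "\<And>c. c \<in> corner_of M ` ?F \<Longrightarrow> card c = 2"
    proof -
      fix c assume "c \<in> corner_of M ` ?F"
      then obtain y where y: "y \<in> ?F" "c = {y, a1 y}" unfolding corner_of_def by blast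
      have "y \<in> A" using y FA by blast
      then have "a1 y \<noteq> y" using ax by blast
      then show "card c = 2" using y by simp
    qed
    show "\<And>c1 c2. c1 \<in> corner_of M ` ?F \<Longrightarrow> c2 \<in> corner_of M ` ?F \<Longrightarrow> c1 \<noteq> c2 \<Longrightarrow> c1 \<inter> c2 = {}"
    proof -
      fix c1 c2 assume c: "c1 \<in> corner_of M ` ?F" "c2 \<in> corner_of M ` ?F" "c1 \<noteq> c2"
      obtain y1 where y1: "y1 \<in> ?F" "c1 = {y1, a1 y1}" using c(1) unfolding corner_of_def by blast
      obtain y2 where y2: "y2 \<in> ?F" "c2 = {y2, a1 y2}" using c(2) unfolding corner_of_def by blast
      have A1: "y1 \<in> A" "y2 \<in> A" using y1 y2 FA by auto
      have i1: "a1 (a1 y1) = y1" "a1 (a1 y2) = y2" using A1 ax by auto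
      show "c1 \<inter> c2 = {}"
      proof (rule ccontr)
        assume "c1 \<inter> c2 \<noteq> {}"
        then have "y1 = y2 \<or> y1 = a1 y2 \<or> a1 y1 = y2 \<or> a1 y1 = a1 y2" using y1(2) y2(2) by blast
        then have "c1 = c2"
        proof (elim disjE)
          assume "y1 = y2" then show ?thesis using y1 y2 by simp
        next
          assume e: "y1 = a1 y2"
          then show ?thesis using y1(2) y2(2) e i1 by (simp add: insert_commute)
        next
          assume e: "a1 y1 = y2"
          then show ?thesis using y1(2) y2(2) e[symmetric] i1 by (simp add: insert_commute)
        next
          assume "a1 y1 = a1 y2"
          then have "a1 (a1 y1) = a1 (a1 y2)" by simp
          then have "y1 = y2" using i1 by simp
          then show ?thesis using y1 y2 by simp
        qed
        then show False using c by simp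
      qed
    qed
  qed
  then show ?thesis unfolding face_degree_def using U by simp
qed

lemma edge4: assumes x: "x \<in> A" shows "edge_of M x = {x, a0 x, a2 x, a0 (a2 x)}"
proof
  show "{x, a0 x, a2 x, a0 (a2 x)} \<subseteq> edge_of M x"
  proof -
    have 1: "x \<in> orb M {0,2} x" by (rule orb_self)
    have 2: "a0 x \<in> orb M {0,2} x" by (rule orb_cl0[OF 1 x]) simp
    have 3: "a2 x \<in> orb M {0,2} x" by (rule orb_cl2[OF 1 x]) simp
    have 4: "a0 (a2 x) \<in> orb M {0,2} x" by (rule orb_cl0[OF 3]) (use ax x in auto)
    show ?thesis unfolding edge_of_def using 1 2 3 4 by blast
  qed
next
  show "edge_of M x \<subseteq> {x, a0 x, a2 x, a0 (a2 x)}"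
  proof
    fix y assume "y \<in> edge_of M x"
    then have "(x, y) \<in> (frel M {0,2})\<^sup>*" unfolding edge_of_def orb_def by simp
    then show "y \<in> {x, a0 x, a2 x, a0 (a2 x)}"
    proof (induction rule: rtrancl_induct)
      case base then show ?case by simp
    next
      case (step y z)
      have yA: "y \<in> A" and z: "z = a0 y \<or> z = a2 y" using step(2) by (auto simp: frel_iff)
      have f: "a0 (a0 x) = x" "a2 (a2 x) = x" "a0 (a0 (a2 x)) = a2 x" "a2 (a0 (a2 x)) = a0 x"
        "a2 (a0 x) = a0 (a2 x)"
        using ax x by (auto simp: ax(1,3))
      show ?case using step(3) z f by auto
    qed
  qed
qed

lemma edge_card4: assumes x: "x \<in> A" shows "card (edge_of M x) = 4"
proof -
  have d: "x \<noteq> a0 x" "x \<noteq> a2 x" "x \<noteq> a0 (a2 x)" "a0 x \<noteq> a2 x" "a0 x \<noteq> a0 (a2 x)" "a2 x \<noteq> a0 (a2 x)"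
  proof -
    show "x \<noteq> a0 x" "x \<noteq> a2 x" "x \<noteq> a0 (a2 x)" using ax x by metis+
    show "a0 x \<noteq> a2 x"
    proof
      assume "a0 x = a2 x"
      then have "a2 (a0 x) = x" using ax x by simp
      then show False using ax x by metis
    qed
    show "a0 x \<noteq> a0 (a2 x)"
    proof
      assume "a0 x = a0 (a2 x)"
      then have "a0 (a0 x) = a0 (a0 (a2 x))" by simp
      then show False using ax x by (metis)
    qed
    show "a2 x \<noteq> a0 (a2 x)" using ax x by metis
  qed
  show ?thesis unfolding edge4[OF x] using d by simp
qed

lemma card_edges: "card A = 4 * card (edges M)"
proof -
  have U: "\<Union>(edges M) = A"
  proof (intro set_eqI iffI)
    fix y assume "y \<in> \<Union>(edges M)"
    then obtain x where "x \<in> A" "y \<in> edge_of M x" unfolding edges_def by blast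
    then show "y \<in> A" using orb_A unfolding edge_of_def by blast
  next
    fix y assume "y \<in> A"
    moreover have "y \<in> edge_of M y" unfolding edge_of_def by (rule orb_self)
    ultimately show "y \<in> \<Union>(edges M)" unfolding edges_def by blast
  qed
  have "4 * card (edges M) = card (\<Union>(edges M))"
  proof (rule card_partition)
    show "finite (edges M)" unfolding edges_def using finA by simp
    show "finite (\<Union>(edges M))" using U finA by simp
    show "\<And>c. c \<in> edges M \<Longrightarrow> card c = 4" unfolding edges_def using edge_card4 by blast
    show "\<And>c1 c2. c1 \<in> edges M \<Longrightarrow> c2 \<in> edges M \<Longrightarrow> c1 \<noteq> c2 \<Longrightarrow> c1 \<inter> c2 = {}"
    proof -
      fix c1 c2 assume c: "c1 \<in> edges M" "c2 \<in> edges M" "c1 \<noteq> c2"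
      show "c1 \<inter> c2 = {}"
      proof (rule ccontr)
        assume "c1 \<inter> c2 \<noteq> {}"
        then obtain z where z: "z \<in> c1" "z \<in> c2" by blast
        obtain x1 where "c1 = edge_of M x1" using c(1) unfolding edges_def by blast
        moreover obtain x2 where "c2 = edge_of M x2" using c(2) unfolding edges_def by blast
        ultimately have "edge_of M z = c1" "edge_of M z = c2" using z unfolding edge_of_def
          by (metis orb_eq)+
        then show False using c by simp
      qed
    qed
  qed
  then show ?thesis using U by simp
qed

lemma selected_eq: "selected M vb = (\<lambda>h. corner_of M (a0 h)) ` UpAll"
proof (intro set_eqI iffI)
  fix c assume "c \<in> selected M vb"
  then obtain j g h where jg: "(j, g) \<in> set OL" "c = corner_of M (a0 h)" "1 \<le> j"
    "h \<in> lorbit M vb j g" "lb h = j - 1" "lb (a0 h) = j"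
    unfolding selected_def lab_lb by blast
  have "h \<in> L j" using jg OL_L lorb_L by blast
  then have hA: "h \<in> A" unfolding L_def by blast
  have e: "Suc (lb h) = j" using jg by simp
  have "h \<in> CC j" unfolding CC_def using jg by blast
  then have "h \<in> UpAll" unfolding UpAll_def using hA e jg by simp
  then show "c \<in> (\<lambda>h. corner_of M (a0 h)) ` UpAll" using jg by blast
next
  fix c assume "c \<in> (\<lambda>h. corner_of M (a0 h)) ` UpAll"
  then obtain h where h: "h \<in> UpAll" "c = corner_of M (a0 h)" by blast
  then obtain g where g: "(Suc (lb h), g) \<in> set OL" "h \<in> lorbit M vb (Suc (lb h)) g"
    unfolding UpAll_def CC_def by blast
  have "lb (a0 h) = Suc (lb h)" using h unfolding UpAll_def by blast
  then show "c \<in> selected M vb" unfolding selected_def lab_lb using g h by fastforce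
qed

lemma sel_inj: "inj_on (\<lambda>h. corner_of M (a0 h)) UpAll"
proof (rule inj_onI)
  fix h1 h2 assume h: "h1 \<in> UpAll" "h2 \<in> UpAll" "corner_of M (a0 h1) = corner_of M (a0 h2)"
  have A1: "h1 \<in> A" "h2 \<in> A" and l1: "lb (a0 h1) = Suc (lb h1)" and l2: "lb (a0 h2) = Suc (lb h2)"
    and C1: "h1 \<in> CC (Suc (lb h1))" and C2: "h2 \<in> CC (Suc (lb h2))"
    using h unfolding UpAll_def by auto
  have a0A: "a0 h1 \<in> A" "a0 h2 \<in> A" using A1 ax by auto
  have "a0 h1 \<in> {a0 h2, a1 (a0 h2)}" using h(3) unfolding corner_of_def by blast
  then show "h1 = h2"
  proof
    assume "a0 h1 = a0 h2"
    then have "a0 (a0 h1) = a0 (a0 h2)" by simp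
    then show ?thesis using A1 ax by simp
  next
    assume e: "a0 h1 \<in> {a1 (a0 h2)}"
    then have e: "a0 h1 = a1 (a0 h2)" by simp
    then have "lb (a0 h1) = lb (a0 h2)" using lb_a1 a0A by simp
    then have ll: "lb h1 = lb h2" using l1 l2 by simp
    have "sg (Suc (lb h2)) h2 = a1 (a0 h2)" by (rule up_sg) simp
    then have "a1 (a0 h2) \<in> CC (Suc (lb h2))" using CC_cl C2 by metis
    then have "a0 h1 \<in> CC (Suc (lb h1))" using e ll by simp
    then show ?thesis using one_b[OF A1(1) refl l1] C1 by blast
  qed
qed

lemma face_some: assumes "h \<in> A" shows "face_of M (SOME x. x \<in> corner_of M (a0 h)) = face_of M h"
proof -
  have "a0 h \<in> corner_of M (a0 h)" unfolding corner_of_def by simp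
  then have "(SOME x. x \<in> corner_of M (a0 h)) \<in> corner_of M (a0 h)" by (rule someI)
  then have "(SOME x. x \<in> corner_of M (a0 h)) = a0 h \<or> (SOME x. x \<in> corner_of M (a0 h)) = a1 (a0 h)"
    unfolding corner_of_def by blast
  moreover have "a0 h \<in> A" using ax assms by blast
  ultimately show ?thesis using face_a0 face_a1 assms by metis
qed

lemma green_count: assumes x0: "x0 \<in> A"
  shows "card {e \<in> selected M vb. face_of M (SOME x. x \<in> e) = face_of M x0} = card (UpAll \<inter> face_of M x0)"
proof -
  let ?f = "\<lambda>h. corner_of M (a0 h)"
  have UA: "UpAll \<subseteq> A" unfolding UpAll_def by blast
  have "{e \<in> selected M vb. face_of M (SOME x. x \<in> e) = face_of M x0} = ?f ` (UpAll \<inter> face_of M x0)"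
  proof (intro set_eqI iffI)
    fix e assume "e \<in> {e \<in> selected M vb. face_of M (SOME x. x \<in> e) = face_of M x0}"
    then obtain h where h: "h \<in> UpAll" "e = ?f h" "face_of M (SOME x. x \<in> ?f h) = face_of M x0"
      using selected_eq by auto
    then have "face_of M h = face_of M x0" using face_some UA by auto
    then have "h \<in> face_of M x0" using inF by blast
    then show "e \<in> ?f ` (UpAll \<inter> face_of M x0)" using h by blast
  next
    fix e assume "e \<in> ?f ` (UpAll \<inter> face_of M x0)"
    then obtain h where h: "h \<in> UpAll" "h \<in> face_of M x0" "e = ?f h" by blast
    have "face_of M h = face_of M x0" using h(2) inF by blast
    then have "face_of M (SOME x. x \<in> e) = face_of M x0" using face_some UA h by auto
    then show "e \<in> {e \<in> selected M vb. face_of M (SOME x. x \<in> e) = face_of M x0}"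
      using h selected_eq by auto
  qed
  moreover have "inj_on ?f (UpAll \<inter> face_of M x0)" using sel_inj by (rule inj_on_subset) blast
  ultimately show ?thesis by (simp add: card_image)
qed

lemma faces_disj: assumes "F1 \<in> faces M" "F2 \<in> faces M" "F1 \<noteq> F2" shows "F1 \<inter> F2 = {}"
proof (rule ccontr)
  assume "F1 \<inter> F2 \<noteq> {}"
  then obtain z where z: "z \<in> F1" "z \<in> F2" by blast
  obtain x1 where x1: "F1 = face_of M x1" using assms(1) unfolding faces_def by blast
  obtain x2 where x2: "F2 = face_of M x2" using assms(2) unfolding faces_def by blast
  have "face_of M z = F1" using z(1) x1 inF by blast
  moreover have "face_of M z = F2" using z(2) x2 inF by blast
  ultimately show False using assms(3) by simp
qed

lemma faces_union: "\<Union>(faces M) = A"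
proof (intro set_eqI iffI)
  fix y assume "y \<in> \<Union>(faces M)"
  then obtain x where "x \<in> A" "y \<in> face_of M x" unfolding faces_def by blast
  then show "y \<in> A" using face_A by blast
next
  fix y assume "y \<in> A"
  moreover have "y \<in> face_of M y" unfolding face_of_def by (rule orb_self)
  ultimately show "y \<in> \<Union>(faces M)" unfolding faces_def by blast
qed

lemma face_main: assumes "F \<in> faces M"
  shows "card F = 4 * card (UpAll \<inter> F) \<and>
         face_degree M F = 2 * card {e \<in> selected M vb. face_of M (SOME x. x \<in> e) = F}"
proof -
  obtain x0 where x0: "x0 \<in> A" "F = face_of M x0" using assms unfolding faces_def by blast
  have a: "card F = 2 * card {h \<in> F. lb (a0 h) = Suc (lb h)}" using face_half x0 by simp
  have b: "card {h \<in> F. lb (a0 h) = Suc (lb h)} = 2 * card (UpAll \<inter> F)" using face_sum x0 by simp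
  have c: "card F = 2 * face_degree M F" using corner_card x0 by simp
  have d: "card {e \<in> selected M vb. face_of M (SOME x. x \<in> e) = F} = card (UpAll \<inter> F)"
    using green_count x0 by simp
  show ?thesis using a b c d by simp
qed

lemma count_main: "card (edges M) = card (selected M vb)"
proof -
  have fin: "finite (faces M)" unfolding faces_def using finA by simp
  have ffin: "\<forall>F\<in>faces M. finite F" using finF unfolding faces_def by blast
  have dis: "\<forall>F1\<in>faces M. \<forall>F2\<in>faces M. F1 \<noteq> F2 \<longrightarrow> F1 \<inter> F2 = {}" using faces_disj by blast
  have "card A = card (\<Union>F\<in>faces M. F)" using faces_union by simp
  also have "... = (\<Sum>F\<in>faces M. card F)" by (rule card_UN_disjoint[OF fin ffin dis])
  also have "... = (\<Sum>F\<in>faces M. 4 * card (UpAll \<inter> F))"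
    by (rule sum.cong[OF refl]) (use face_main in blast)
  also have "... = 4 * (\<Sum>F\<in>faces M. card (UpAll \<inter> F))" by (simp add: sum_distrib_left)
  also have "(\<Sum>F\<in>faces M. card (UpAll \<inter> F)) = card (\<Union>F\<in>faces M. UpAll \<inter> F)"
    by (rule card_UN_disjoint[symmetric]) (use fin ffin dis in auto)
  also have "(\<Union>F\<in>faces M. UpAll \<inter> F) = UpAll" using faces_union unfolding UpAll_def by blast
  finally have "card A = 4 * card UpAll" .
  moreover have "card (selected M vb) = card UpAll" unfolding selected_eq by (rule card_image[OF sel_inj])
  ultimately show ?thesis using card_edges by simp
qed

end

theorem proposition1:
  fixes M :: "'f cmap" and vb :: "'f set"
    and U :: "'f ugraph" and l :: "'f set \<Rightarrow> nat" and \<epsilon> :: bool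
  assumes "is_map M" and "bipartite M" and "vb \<in> vertices M"
    and "Phi M vb = ((U, l), \<epsilon>)"
  shows "(vertices M = Vw U \<union> {vb} \<and> vb \<notin> Vw U \<and>
          (\<forall>v\<in>Vw U. l v = mdist M v vb)) \<and>
         (Vg U = faces M \<and>
         (\<forall>F\<in>faces M. face_degree M F = 2 * green_degree U F)) \<and>
         card (edges M) = card (Eu U)"
proof -
  interpret pm M vb using assms(1-3) by unfold_locales
  have U: "U = \<lparr> Vw = vertices M - {vb}, Vg = faces M, Eu = selected M vb,
         ends = (\<lambda>c. (vertex_of M (SOME x. x \<in> c), face_of M (SOME x. x \<in> c))) \<rparr>"
    and l: "l = (\<lambda>v. mdist M vb v)"
    using assms(4) unfolding Phi_def by auto
  have i1: "vertices M = Vw U \<union> {vb}" using U vbV by auto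
  have i2: "vb \<notin> Vw U" using U by simp
  have i3: "\<forall>v\<in>Vw U. l v = mdist M v vb"
  proof
    fix v show "l v = mdist M v vb" unfolding l by (rule mdist_sym)
  qed
  have i: "vertices M = Vw U \<union> {vb} \<and> vb \<notin> Vw U \<and> (\<forall>v\<in>Vw U. l v = mdist M v vb)"
    using i1 i2 i3 by blast
  have ii: "\<forall>F\<in>faces M. face_degree M F = 2 * green_degree U F"
    using face_main unfolding green_degree_def U by simp
  have iii: "card (edges M) = card (Eu U)" using count_main U by simp
  show ?thesis using i ii iii U by simp
qed

end
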